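(* Let $f^*:[0,1]\to\mathbb{R}$ be any function, let $S=\{(x_i,y_i)\}_{i=1}^n$ with $0<x_1<x_2<\dots<x_n<1$, and let $\hat f_S$ be the minimum-norm interpolating two-layer ReLU network for $S$ (defined in the context). Then for any $i\in\{2,\dots,n-2\}$ and $x\in[x_i,x_{i+1})$, \[ |\hat f_S(x)-f^*(x)|\le\max\left\{|g_i(x)-f^*(x)|,\ \min\{|g_{i+1}(x)-f^*(x)|,|g_{i-1}(x)-f^*(x)|\}\right\}; \] for $x\in[0,x_2)$, $|\hat f_S(x)-f^*(x)|=|g_1(x)-f^*(x)|$; and for $x\in[x_{n-1},1]$, $|\hat f_S(x)-f^*(x)|=|g_{n-1}(x)-f^*(x)|$.
   Context: A two-layer ReLU network with skip connection is $f_{\theta,a_0,b_0}(x)=\sum_{j=1}^m a_j(w_jx+b_j)_++a_0x+b_0$ with $\theta=\{a_j,w_j,b_j\}_{j=1}^m\in\mathbb{R}^{3m}$ and arbitrary width $m$. The min-norm interpolator $\hat f_S$ is the (unique) minimizer of $\|\theta\|_2^2$ over all $m,\theta,a_0,b_0$ subject to $f_{\theta,a_0,b_0}(x_i)=y_i$ for all $i\in[n]$ (the weights $a_0,b_0$ are not penalized). For $i\in[n-1]$, $g_i$ denotes the affine function through $(x_i,y_i)$ and $(x_{i+1},y_{i+1})$. *)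

theory Defs
  imports Complex_Main
begin

text \<open>A two-layer ReLU network with skip connection; the hidden units are given as a
  list of triples (a_j, w_j, b_j), so the width m is the length of the list.\<close>
definition relu_net :: "(real \<times> real \<times> real) list \<Rightarrow> real \<Rightarrow> real \<Rightarrow> real \<Rightarrow> real" where
  "relu_net \<theta> a0 b0 t = (\<Sum>(a, w, b) \<leftarrow> \<theta>. a * max 0 (w * t + b)) + a0 * t + b0"

definition param_norm2 :: "(real \<times> real \<times> real) list \<Rightarrow> real" where
  "param_norm2 \<theta> = (\<Sum>(a, w, b) \<leftarrow> \<theta>. a\<^sup>2 + w\<^sup>2 + b\<^sup>2)"

definition interpolates ::
  "nat \<Rightarrow> (nat \<Rightarrow> real) \<Rightarrow> (nat \<Rightarrow> real) \<Rightarrow> (real \<times> real \<times> real) list \<Rightarrow> real \<Rightarrow> real \<Rightarrow> bool" where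
  "interpolates n xs ys \<theta> a0 b0 \<longleftrightarrow> (\<forall>i\<in>{1..n}. relu_net \<theta> a0 b0 (xs i) = ys i)"

definition min_norm_interpolant ::
  "nat \<Rightarrow> (nat \<Rightarrow> real) \<Rightarrow> (nat \<Rightarrow> real) \<Rightarrow> (real \<Rightarrow> real) \<Rightarrow> bool" where
  "min_norm_interpolant n xs ys f \<longleftrightarrow>
     (\<exists>\<theta> a0 b0. interpolates n xs ys \<theta> a0 b0 \<and> f = relu_net \<theta> a0 b0 \<and>
        (\<forall>\<theta>' a0' b0'. interpolates n xs ys \<theta>' a0' b0' \<longrightarrow> param_norm2 \<theta> \<le> param_norm2 \<theta>'))"

definition seg_line :: "(nat \<Rightarrow> real) \<Rightarrow> (nat \<Rightarrow> real) \<Rightarrow> nat \<Rightarrow> real \<Rightarrow> real" where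
  "seg_line xs ys i t = ys i + (ys (Suc i) - ys i) / (xs (Suc i) - xs i) * (t - xs i)"

end

theory Submission
  imports Defs
begin

definition wt :: "real \<Rightarrow> real" where "wt x = sqrt (1 + x\<^sup>2)"
definition kf :: "(real \<Rightarrow> real) \<Rightarrow> real set \<Rightarrow> real \<Rightarrow> real" where
  "kf J S x = (\<Sum>\<sigma>\<in>S. J \<sigma> * max 0 (x - \<sigma>))"
definition kc :: "(real \<Rightarrow> real) \<Rightarrow> real set \<Rightarrow> real" where
  "kc J S = (\<Sum>\<sigma>\<in>S. \<bar>J \<sigma>\<bar> * wt \<sigma>)"

lemma wt_ge1: "1 \<le> wt x"
  unfolding wt_def by simp

lemma wt_pos: "0 < wt x" using wt_ge1[of x] by linarith

lemma wt_sq: "(wt x)\<^sup>2 = 1 + x\<^sup>2"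
  unfolding wt_def by (simp add: add_nonneg_nonneg)

lemma abs_le_wt: "\<bar>x\<bar> \<le> wt x"
  unfolding wt_def by (rule real_le_rsqrt) simp

lemma wt_lip: "\<bar>wt a - wt b\<bar> \<le> \<bar>a - b\<bar>"
proof -
  have e: "(wt a - wt b) * (wt a + wt b) = (a - b) * (a + b)"
    using wt_sq[of a] wt_sq[of b] by (simp add: algebra_simps power2_eq_square)
  have p: "0 < wt a + wt b" using wt_pos[of a] wt_pos[of b] by linarith
  have "\<bar>a + b\<bar> \<le> wt a + wt b" using abs_le_wt[of a] abs_le_wt[of b] by linarith
  hence "\<bar>a - b\<bar> * \<bar>a + b\<bar> \<le> \<bar>a - b\<bar> * (wt a + wt b)"
    by (intro mult_left_mono) auto
  moreover have "\<bar>wt a - wt b\<bar> * (wt a + wt b) = \<bar>a - b\<bar> * \<bar>a + b\<bar>"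
    using e p by (metis abs_mult abs_of_pos)
  ultimately have "\<bar>wt a - wt b\<bar> * (wt a + wt b) \<le> \<bar>a - b\<bar> * (wt a + wt b)" by simp
  thus ?thesis using p by (simp add: mult_le_cancel_right)
qed

lemma wt_mono: "0 \<le> a \<Longrightarrow> a \<le> b \<Longrightarrow> wt a \<le> wt b"
  unfolding wt_def by (simp add: power_mono)

lemma wt_edge:
  assumes "0 \<le> x1" "x1 < t" "t < x2"
  shows "(t - x1) * wt x2 < (x2 - x1) * wt t"
proof -
  define d where "d = x2 - x1"
  define u where "u = t - x1"
  have du: "0 < u" "u < d" using assms unfolding d_def u_def by auto
  have key: "(x2 - x1)\<^sup>2 * (1 + t\<^sup>2) - (t - x1)\<^sup>2 * (1 + x2\<^sup>2)
      = (d - u) * ((d + u) + x1 * (d * t + u * x2))"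
    unfolding d_def u_def by (simp add: algebra_simps power2_eq_square)
  have "0 \<le> x1 * (d * t + u * x2)" using assms du by (intro mult_nonneg_nonneg add_nonneg_nonneg) auto
  hence "0 < (d - u) * ((d + u) + x1 * (d * t + u * x2))" using du by (intro mult_pos_pos) auto
  hence lt: "((t - x1) * wt x2)\<^sup>2 < ((x2 - x1) * wt t)\<^sup>2"
    using key by (simp add: power_mult_distrib wt_sq)
  have "0 \<le> (x2 - x1) * wt t" using assms wt_pos[of t] by simp
  thus ?thesis using lt by (meson power_less_imp_less_base)
qed


lemma max_pos_mult: "0 < w \<Longrightarrow> max 0 (w * y) = w * max (0::real) y"
proof (cases "y \<le> 0")
  case True
  assume "0 < w"
  hence "w * y \<le> 0" using True by (simp add: mult_nonneg_nonpos)
  thus ?thesis using True by (simp add: max_def)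
next
  case False
  assume "0 < w"
  hence "0 \<le> w * y" using False by simp
  thus ?thesis using False by (simp add: max_def)
qed

lemma max_neg_mult: "w < 0 \<Longrightarrow> max 0 (w * y) = (- w) * (max (0::real) y - y)"
proof (cases "y \<le> 0")
  case True
  assume "w < 0"
  hence "0 \<le> w * y" using True by (simp add: mult_nonpos_nonpos)
  thus ?thesis using True by (simp add: max_def)
next
  case False
  assume "w < 0"
  hence "w * y \<le> 0" using False by (simp add: mult_nonpos_nonneg mult_le_0_iff)
  thus ?thesis using False by (simp add: max_def)
qed

lemma neuron_decomp:
  fixes a w b x :: real
  assumes "w \<noteq> 0"
  shows "a * max 0 (w * x + b) = (a * \<bar>w\<bar>) * max 0 (x - (- b / w)) + (if w < 0 then a * w * x + a * b else 0)"
proof -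
  have e0: "w * (x - (- b / w)) = w * x + b" using assms by (simp add: algebra_simps)
  note e = e0[symmetric]
  show ?thesis
  proof (cases "w > 0")
    case True
    thus ?thesis unfolding e using max_pos_mult[OF True] by simp
  next
    case False
    hence wn: "w < 0" using assms by simp
    have "a * max 0 (w * x + b) = (a * \<bar>w\<bar>) * max 0 (x - (- b / w)) - a * (-w) * (x - (- b / w))"
      unfolding e max_neg_mult[OF wn] using wn by (simp add: algebra_simps)
    also have "a * (-w) * (x - (- b / w)) = - (a * w * x + a * b)" using assms by (simp add: field_simps)
    finally show ?thesis using wn by simp
  qed
qed

lemma amgm_neuron:
  fixes a w b :: real
  assumes "w \<noteq> 0"
  shows "2 * (\<bar>a * \<bar>w\<bar>\<bar> * wt (- b / w)) \<le> a\<^sup>2 + w\<^sup>2 + b\<^sup>2"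
proof -
  have "\<bar>w\<bar> * wt (- b / w) = sqrt (w\<^sup>2 * (1 + (- b / w)\<^sup>2))"
    unfolding wt_def by (simp add: real_sqrt_mult)
  also have "w\<^sup>2 * (1 + (- b / w)\<^sup>2) = w\<^sup>2 + b\<^sup>2" using assms by (simp add: field_simps power2_eq_square)
  finally have e: "\<bar>w\<bar> * wt (- b / w) = sqrt (w\<^sup>2 + b\<^sup>2)" .
  define s where "s = sqrt (w\<^sup>2 + b\<^sup>2)"
  have s2: "s\<^sup>2 = w\<^sup>2 + b\<^sup>2" unfolding s_def by simp
  have "0 \<le> (\<bar>a\<bar> - s)\<^sup>2" by simp
  hence "2 * \<bar>a\<bar> * s \<le> a\<^sup>2 + s\<^sup>2" by (simp add: power2_eq_square algebra_simps)
  moreover have "\<bar>a * \<bar>w\<bar>\<bar> * wt (- b / w) = \<bar>a\<bar> * s" using e unfolding s_def by (simp add: abs_mult)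
  ultimately show ?thesis using s2 by simp
qed

lemma sum_extend:
  fixes J g :: "real \<Rightarrow> real"
  assumes "finite S" "\<forall>\<sigma>. \<sigma> \<notin> S \<longrightarrow> J \<sigma> = 0" "S \<subseteq> T" "finite T"
  shows "(\<Sum>\<sigma>\<in>T. J \<sigma> * g \<sigma>) = (\<Sum>\<sigma>\<in>S. J \<sigma> * g \<sigma>)"
  using assms by (intro sum.mono_neutral_right) auto

lemma sum_extend_abs:
  fixes J g :: "real \<Rightarrow> real"
  assumes "finite S" "\<forall>\<sigma>. \<sigma> \<notin> S \<longrightarrow> J \<sigma> = 0" "S \<subseteq> T" "finite T"
  shows "(\<Sum>\<sigma>\<in>T. \<bar>J \<sigma>\<bar> * g \<sigma>) = (\<Sum>\<sigma>\<in>S. \<bar>J \<sigma>\<bar> * g \<sigma>)"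
  using assms by (intro sum.mono_neutral_right) auto

lemma represent:
  "\<exists>J S \<alpha> \<beta>. finite S \<and> (\<forall>\<sigma>. \<sigma> \<notin> S \<longrightarrow> J \<sigma> = 0) \<and>
     (\<forall>x. (\<Sum>(a, w, b) \<leftarrow> \<theta>. a * max 0 (w * x + b)) = \<alpha> * x + \<beta> + kf J S x) \<and>
     2 * kc J S \<le> param_norm2 \<theta>"
proof (induction \<theta>)
  case Nil
  show ?case by (rule exI[of _ "\<lambda>_. 0"], rule exI[of _ "{}"], rule exI[of _ 0], rule exI[of _ 0])
      (auto simp: kf_def kc_def param_norm2_def)
next
  case (Cons t \<theta>)
  obtain a w b where t: "t = (a, w, b)" by (cases t) auto
  from Cons obtain J S \<alpha> \<beta> where fin: "finite S" and z: "\<forall>\<sigma>. \<sigma> \<notin> S \<longrightarrow> J \<sigma> = 0"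
    and f: "\<forall>x. (\<Sum>(a, w, b) \<leftarrow> \<theta>. a * max 0 (w * x + b)) = \<alpha> * x + \<beta> + kf J S x"
    and c: "2 * kc J S \<le> param_norm2 \<theta>" by blast
  have pn: "param_norm2 (t # \<theta>) = a\<^sup>2 + w\<^sup>2 + b\<^sup>2 + param_norm2 \<theta>"
    unfolding param_norm2_def t by simp
  show ?case
  proof (cases "w = 0")
    case True
    have nn: "0 \<le> a\<^sup>2 + w\<^sup>2 + b\<^sup>2" by simp
    have cc: "2 * kc J S \<le> param_norm2 (t # \<theta>)" using c pn nn by linarith
    show ?thesis
      apply (rule exI[of _ J], rule exI[of _ S], rule exI[of _ \<alpha>], rule exI[of _ "\<beta> + a * max 0 b"])
      using fin z f cc True t by auto
  next
    case False
    define \<tau> where "\<tau> = - b / w"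
    define cc where "cc = a * \<bar>w\<bar>"
    define J' where "J' = (\<lambda>\<sigma>. J \<sigma> + (if \<sigma> = \<tau> then cc else 0))"
    have fin': "finite (insert \<tau> S)" using fin by simp
    have z': "\<forall>\<sigma>. \<sigma> \<notin> insert \<tau> S \<longrightarrow> J' \<sigma> = 0" using z unfolding J'_def by auto
    have kfe: "kf J' (insert \<tau> S) x = kf J S x + cc * max 0 (x - \<tau>)" for x
    proof -
      have "kf J' (insert \<tau> S) x = (\<Sum>\<sigma>\<in>insert \<tau> S. J \<sigma> * max 0 (x - \<sigma>)) +
            (\<Sum>\<sigma>\<in>insert \<tau> S. (if \<sigma> = \<tau> then cc else 0) * max 0 (x - \<sigma>))"
        unfolding kf_def J'_def by (simp add: distrib_right sum.distrib)
      also have "(\<Sum>\<sigma>\<in>insert \<tau> S. J \<sigma> * max 0 (x - \<sigma>)) = kf J S x"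
        unfolding kf_def using fin z by (intro sum_extend) auto
      also have "(\<Sum>\<sigma>\<in>insert \<tau> S. (if \<sigma> = \<tau> then cc else 0) * max 0 (x - \<sigma>))
          = (\<Sum>\<sigma>\<in>insert \<tau> S. if \<sigma> = \<tau> then cc * max 0 (x - \<tau>) else 0)"
        by (intro sum.cong) auto
      also have "\<dots> = cc * max 0 (x - \<tau>)" using fin' by (simp add: sum.delta)
      finally show ?thesis .
    qed
    have kce: "kc J' (insert \<tau> S) \<le> kc J S + \<bar>cc\<bar> * wt \<tau>"
    proof -
      have "kc J' (insert \<tau> S) \<le> (\<Sum>\<sigma>\<in>insert \<tau> S. \<bar>J \<sigma>\<bar> * wt \<sigma> + \<bar>if \<sigma> = \<tau> then cc else 0\<bar> * wt \<sigma>)"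
        unfolding kc_def J'_def
        by (intro sum_mono) (metis abs_triangle_ineq distrib_right mult_right_mono wt_pos less_imp_le)
      also have "\<dots> = (\<Sum>\<sigma>\<in>insert \<tau> S. \<bar>J \<sigma>\<bar> * wt \<sigma>) + (\<Sum>\<sigma>\<in>insert \<tau> S. \<bar>if \<sigma> = \<tau> then cc else 0\<bar> * wt \<sigma>)"
        by (simp add: sum.distrib)
      also have "(\<Sum>\<sigma>\<in>insert \<tau> S. \<bar>J \<sigma>\<bar> * wt \<sigma>) = kc J S"
        unfolding kc_def using fin z by (intro sum_extend_abs) auto
      also have "(\<Sum>\<sigma>\<in>insert \<tau> S. \<bar>if \<sigma> = \<tau> then cc else 0\<bar> * wt \<sigma>)
          = (\<Sum>\<sigma>\<in>insert \<tau> S. if \<sigma> = \<tau> then \<bar>cc\<bar> * wt \<tau> else 0)"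
        by (intro sum.cong) auto
      also have "\<dots> = \<bar>cc\<bar> * wt \<tau>" using fin' by (simp add: sum.delta)
      finally show ?thesis by simp
    qed
    have am: "2 * (\<bar>cc\<bar> * wt \<tau>) \<le> a\<^sup>2 + w\<^sup>2 + b\<^sup>2"
      unfolding cc_def \<tau>_def using amgm_neuron[OF False] .
    show ?thesis
      apply (rule exI[of _ J'], rule exI[of _ "insert \<tau> S"],
          rule exI[of _ "\<alpha> + (if w < 0 then a * w else 0)"], rule exI[of _ "\<beta> + (if w < 0 then a * b else 0)"])
      using fin' z' kfe kce am c pn f neuron_decomp[OF False, of a _ b] unfolding t cc_def \<tau>_def
      by (auto simp: algebra_simps)
  qed
qed


definition neuron_of :: "real \<Rightarrow> real \<Rightarrow> real \<times> real \<times> real" where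
  "neuron_of c \<sigma> = (if c = 0 then (0, 0, 0) else (c / sqrt (\<bar>c\<bar> / wt \<sigma>), sqrt (\<bar>c\<bar> / wt \<sigma>), - sqrt (\<bar>c\<bar> / wt \<sigma>) * \<sigma>))"

lemma neuron_of_fun: "(case neuron_of c \<sigma> of (a, w, b) \<Rightarrow> a * max 0 (w * x + b)) = c * max 0 (x - \<sigma>)"
proof (cases "c = 0")
  case True thus ?thesis by (simp add: neuron_of_def)
next
  case False
  define w where "w = sqrt (\<bar>c\<bar> / wt \<sigma>)"
  have wp: "0 < w" unfolding w_def using False wt_pos[of \<sigma>] by simp
  have "(case neuron_of c \<sigma> of (a, w, b) \<Rightarrow> a * max 0 (w * x + b)) = c / w * max 0 (w * (x - \<sigma>))"
    using False unfolding neuron_of_def w_def[symmetric] by (simp add: algebra_simps)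
  also have "\<dots> = c * max 0 (x - \<sigma>)" using wp by (simp add: max_pos_mult)
  finally show ?thesis .
qed

lemma neuron_of_cost: "(case neuron_of c \<sigma> of (a, w, b) \<Rightarrow> a\<^sup>2 + w\<^sup>2 + b\<^sup>2) = 2 * (\<bar>c\<bar> * wt \<sigma>)"
proof (cases "c = 0")
  case True thus ?thesis by (simp add: neuron_of_def)
next
  case False
  define w where "w = sqrt (\<bar>c\<bar> / wt \<sigma>)"
  have wp: "0 < wt \<sigma>" using wt_pos .
  have w2: "w\<^sup>2 = \<bar>c\<bar> / wt \<sigma>" unfolding w_def using wp by simp
  have "(case neuron_of c \<sigma> of (a, w, b) \<Rightarrow> a\<^sup>2 + w\<^sup>2 + b\<^sup>2) = c\<^sup>2 / w\<^sup>2 + w\<^sup>2 * (1 + \<sigma>\<^sup>2)"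
    using False unfolding neuron_of_def w_def[symmetric] by (simp add: power_divide power_mult_distrib algebra_simps)
  also have "\<dots> = c\<^sup>2 / (\<bar>c\<bar> / wt \<sigma>) + \<bar>c\<bar> / wt \<sigma> * (wt \<sigma>)\<^sup>2" unfolding w2 wt_sq ..
  also have "\<dots> = 2 * (\<bar>c\<bar> * wt \<sigma>)" using False wp
    by (simp add: field_simps power2_eq_square)
  finally show ?thesis .
qed

definition opt :: "nat \<Rightarrow> (nat \<Rightarrow> real) \<Rightarrow> (real \<Rightarrow> real) \<Rightarrow> real set \<Rightarrow> bool" where
  "opt n xs J S \<longleftrightarrow> finite S \<and> (\<forall>\<sigma>. \<sigma> \<notin> S \<longrightarrow> J \<sigma> = 0) \<and>
     (\<forall>J' S'. finite S' \<longrightarrow> (\<exists>\<alpha> \<beta>. \<forall>k\<in>{1..n}. kf J' S' (xs k) - kf J S (xs k) = \<alpha> * xs k + \<beta>)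
        \<longrightarrow> kc J S \<le> kc J' S')"

lemma realize:
  assumes "finite S"
  shows "relu_net (map (\<lambda>\<sigma>. neuron_of (J \<sigma>) \<sigma>) (sorted_list_of_set S)) a0 b0 x = kf J S x + a0 * x + b0"
    and "param_norm2 (map (\<lambda>\<sigma>. neuron_of (J \<sigma>) \<sigma>) (sorted_list_of_set S)) = 2 * kc J S"
proof -
  have d: "distinct (sorted_list_of_set S)" and s: "set (sorted_list_of_set S) = S" using assms by auto
  have "(\<Sum>(a, w, b) \<leftarrow> map (\<lambda>\<sigma>. neuron_of (J \<sigma>) \<sigma>) (sorted_list_of_set S). a * max 0 (w * x + b))
      = (\<Sum>\<sigma> \<leftarrow> sorted_list_of_set S. J \<sigma> * max 0 (x - \<sigma>))"
    by (simp add: o_def neuron_of_fun)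
  also have "\<dots> = kf J S x" unfolding kf_def using sum_list_distinct_conv_sum_set[OF d] s by simp
  finally show "relu_net (map (\<lambda>\<sigma>. neuron_of (J \<sigma>) \<sigma>) (sorted_list_of_set S)) a0 b0 x = kf J S x + a0 * x + b0"
    unfolding relu_net_def by simp
  have "param_norm2 (map (\<lambda>\<sigma>. neuron_of (J \<sigma>) \<sigma>) (sorted_list_of_set S))
      = (\<Sum>\<sigma> \<leftarrow> sorted_list_of_set S. 2 * (\<bar>J \<sigma>\<bar> * wt \<sigma>))"
    unfolding param_norm2_def by (simp add: o_def neuron_of_cost)
  also have "\<dots> = 2 * kc J S" unfolding kc_def using sum_list_distinct_conv_sum_set[OF d] s
    by (simp add: sum_distrib_left)
  finally show "param_norm2 (map (\<lambda>\<sigma>. neuron_of (J \<sigma>) \<sigma>) (sorted_list_of_set S)) = 2 * kc J S" .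
qed

lemma min_opt:
  assumes "min_norm_interpolant n xs ys fhat"
  shows "\<exists>J S \<alpha> \<beta>. opt n xs J S \<and> (\<forall>x. fhat x = \<alpha> * x + \<beta> + kf J S x)"
proof -
  obtain \<theta> a0 b0 where int: "interpolates n xs ys \<theta> a0 b0" and fe: "fhat = relu_net \<theta> a0 b0"
    and mn: "\<forall>\<theta>' a0' b0'. interpolates n xs ys \<theta>' a0' b0' \<longrightarrow> param_norm2 \<theta> \<le> param_norm2 \<theta>'"
    using assms unfolding min_norm_interpolant_def by blast
  obtain J S \<alpha> \<beta> where fin: "finite S" and z: "\<forall>\<sigma>. \<sigma> \<notin> S \<longrightarrow> J \<sigma> = 0"
    and f: "\<forall>x. (\<Sum>(a, w, b) \<leftarrow> \<theta>. a * max 0 (w * x + b)) = \<alpha> * x + \<beta> + kf J S x"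
    and c: "2 * kc J S \<le> param_norm2 \<theta>" using represent[of \<theta>] by blast
  have fx: "fhat x = (\<alpha> + a0) * x + (\<beta> + b0) + kf J S x" for x
  proof -
    have h: "(\<Sum>(a, w, b) \<leftarrow> \<theta>. a * max 0 (w * x + b)) = \<alpha> * x + \<beta> + kf J S x" using f by blast
    show ?thesis unfolding fe relu_net_def h by (simp add: algebra_simps)
  qed
  have "opt n xs J S"
    unfolding opt_def
  proof (intro conjI fin z allI impI)
    fix J' and S' :: "real set"
    assume fin': "finite S'" and "\<exists>\<alpha> \<beta>. \<forall>k\<in>{1..n}. kf J' S' (xs k) - kf J S (xs k) = \<alpha> * xs k + \<beta>"
    then obtain \<alpha>' \<beta>' where d: "\<forall>k\<in>{1..n}. kf J' S' (xs k) - kf J S (xs k) = \<alpha>' * xs k + \<beta>'" by blast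
    define \<theta>' where "\<theta>' = map (\<lambda>\<sigma>. neuron_of (J' \<sigma>) \<sigma>) (sorted_list_of_set S')"
    have "interpolates n xs ys \<theta>' (\<alpha> + a0 - \<alpha>') (\<beta> + b0 - \<beta>')"
      unfolding interpolates_def
    proof
      fix k assume k: "k \<in> {1..n}"
      have "ys k = fhat (xs k)" using int k unfolding interpolates_def fe by simp
      thus "relu_net \<theta>' (\<alpha> + a0 - \<alpha>') (\<beta> + b0 - \<beta>') (xs k) = ys k"
        unfolding \<theta>'_def realize(1)[OF fin'] fx using d k by (simp add: algebra_simps)
    qed
    hence "param_norm2 \<theta> \<le> param_norm2 \<theta>'" using mn by blast
    thus "kc J S \<le> kc J' S'" using c realize(2)[OF fin', of J'] unfolding \<theta>'_def by simp
  qed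
  thus ?thesis using fx by blast
qed


lemma opt_neg:
  assumes "opt n xs J S"
  shows "opt n xs (\<lambda>\<sigma>. - J \<sigma>) S"
proof -
  have kfn: "kf (\<lambda>\<sigma>. - J \<sigma>) S x = - kf J S x" for J S x unfolding kf_def by (simp add: sum_negf)
  have kcn: "kc (\<lambda>\<sigma>. - J \<sigma>) S = kc J S" for J S unfolding kc_def by simp
  show ?thesis unfolding opt_def
  proof (intro conjI allI impI)
    show "finite S" "\<And>\<sigma>. \<sigma> \<notin> S \<Longrightarrow> - J \<sigma> = 0" using assms unfolding opt_def by auto
    fix J' and S' :: "real set"
    assume fin': "finite S'" and "\<exists>\<alpha> \<beta>. \<forall>k\<in>{1..n}. kf J' S' (xs k) - kf (\<lambda>\<sigma>. - J \<sigma>) S (xs k) = \<alpha> * xs k + \<beta>"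
    then obtain \<alpha> \<beta> where d: "\<forall>k\<in>{1..n}. kf J' S' (xs k) - kf (\<lambda>\<sigma>. - J \<sigma>) S (xs k) = \<alpha> * xs k + \<beta>" by blast
    have "\<forall>k\<in>{1..n}. kf (\<lambda>\<sigma>. - J' \<sigma>) S' (xs k) - kf J S (xs k) = (- \<alpha>) * xs k + (- \<beta>)"
      using d unfolding kfn by (auto simp: algebra_simps)
    hence "kc J S \<le> kc (\<lambda>\<sigma>. - J' \<sigma>) S'" using assms fin' unfolding opt_def by blast
    thus "kc (\<lambda>\<sigma>. - J \<sigma>) S \<le> kc J' S'" unfolding kcn .
  qed
qed

lemma pert:
  assumes o: "opt n xs J S" and fP: "finite P"
    and dat: "\<forall>k\<in>{1..n}. (\<Sum>\<sigma>\<in>P. d \<sigma> * max 0 (xs k - \<sigma>)) = \<alpha> * xs k + \<beta>"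
  shows "0 \<le> (\<Sum>\<sigma>\<in>P. (\<bar>J \<sigma> + d \<sigma>\<bar> - \<bar>J \<sigma>\<bar>) * wt \<sigma>)"
proof -
  have fin: "finite S" and z: "\<forall>\<sigma>. \<sigma> \<notin> S \<longrightarrow> J \<sigma> = 0" using o unfolding opt_def by auto
  define J' where "J' = (\<lambda>\<sigma>. J \<sigma> + (if \<sigma> \<in> P then d \<sigma> else 0))"
  have fU: "finite (S \<union> P)" using fin fP by simp
  have kfe: "kf J' (S \<union> P) x = kf J S x + (\<Sum>\<sigma>\<in>P. d \<sigma> * max 0 (x - \<sigma>))" for x
  proof -
    have "kf J' (S \<union> P) x = (\<Sum>\<sigma>\<in>S \<union> P. J \<sigma> * max 0 (x - \<sigma>)) +
        (\<Sum>\<sigma>\<in>S \<union> P. (if \<sigma> \<in> P then d \<sigma> else 0) * max 0 (x - \<sigma>))"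
      unfolding kf_def J'_def by (simp add: distrib_right sum.distrib)
    also have "(\<Sum>\<sigma>\<in>S \<union> P. J \<sigma> * max 0 (x - \<sigma>)) = kf J S x"
      unfolding kf_def using fin z fU by (intro sum_extend) auto
    also have "(\<Sum>\<sigma>\<in>S \<union> P. (if \<sigma> \<in> P then d \<sigma> else 0) * max 0 (x - \<sigma>))
        = (\<Sum>\<sigma>\<in>P. d \<sigma> * max 0 (x - \<sigma>))"
      using fU by (intro sum.mono_neutral_cong_right) auto
    finally show ?thesis .
  qed
  have kce: "kc J' (S \<union> P) = kc J S + (\<Sum>\<sigma>\<in>P. (\<bar>J \<sigma> + d \<sigma>\<bar> - \<bar>J \<sigma>\<bar>) * wt \<sigma>)"
  proof -
    have "kc J' (S \<union> P) = (\<Sum>\<sigma>\<in>S \<union> P. \<bar>J \<sigma>\<bar> * wt \<sigma>) +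
        (\<Sum>\<sigma>\<in>S \<union> P. (\<bar>J' \<sigma>\<bar> - \<bar>J \<sigma>\<bar>) * wt \<sigma>)"
      unfolding kc_def by (simp add: algebra_simps sum.distrib[symmetric])
    also have "(\<Sum>\<sigma>\<in>S \<union> P. \<bar>J \<sigma>\<bar> * wt \<sigma>) = kc J S"
      unfolding kc_def using fin z fU by (intro sum_extend_abs) auto
    also have "(\<Sum>\<sigma>\<in>S \<union> P. (\<bar>J' \<sigma>\<bar> - \<bar>J \<sigma>\<bar>) * wt \<sigma>) = (\<Sum>\<sigma>\<in>P. (\<bar>J \<sigma> + d \<sigma>\<bar> - \<bar>J \<sigma>\<bar>) * wt \<sigma>)"
      using fU unfolding J'_def by (intro sum.mono_neutral_cong_right) auto
    finally show ?thesis .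
  qed
  have "\<forall>k\<in>{1..n}. kf J' (S \<union> P) (xs k) - kf J S (xs k) = \<alpha> * xs k + \<beta>"
    using dat kfe by simp
  hence "kc J S \<le> kc J' (S \<union> P)" using o fU unfolding opt_def by blast
  thus ?thesis using kce by simp
qed

lemma pert2:
  assumes o: "opt n xs J S" and dist: "a \<noteq> b"
    and dat: "\<forall>k\<in>{1..n}. da * max 0 (xs k - a) + db * max 0 (xs k - b) = \<alpha> * xs k + \<beta>"
  shows "0 \<le> (\<bar>J a + da\<bar> - \<bar>J a\<bar>) * wt a + (\<bar>J b + db\<bar> - \<bar>J b\<bar>) * wt b"
proof -
  define d where "d = (\<lambda>_. 0::real)(a := da, b := db)"
  have "0 \<le> (\<Sum>\<sigma>\<in>{a, b}. (\<bar>J \<sigma> + d \<sigma>\<bar> - \<bar>J \<sigma>\<bar>) * wt \<sigma>)"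
    by (rule pert[OF o, of _ _ \<alpha> \<beta>]) (use dat dist in \<open>auto simp: d_def\<close>)
  thus ?thesis using dist by (simp add: d_def)
qed

lemma pert3:
  assumes o: "opt n xs J S" and dist: "a \<noteq> b" "a \<noteq> c" "b \<noteq> c"
    and dat: "\<forall>k\<in>{1..n}. da * max 0 (xs k - a) + db * max 0 (xs k - b) + dc * max 0 (xs k - c) = \<alpha> * xs k + \<beta>"
  shows "0 \<le> (\<bar>J a + da\<bar> - \<bar>J a\<bar>) * wt a + (\<bar>J b + db\<bar> - \<bar>J b\<bar>) * wt b + (\<bar>J c + dc\<bar> - \<bar>J c\<bar>) * wt c"
proof -
  define d where "d = (\<lambda>_. 0::real)(a := da, b := db, c := dc)"
  have "0 \<le> (\<Sum>\<sigma>\<in>{a, b, c}. (\<bar>J \<sigma> + d \<sigma>\<bar> - \<bar>J \<sigma>\<bar>) * wt \<sigma>)"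
    by (rule pert[OF o, of _ _ \<alpha> \<beta>]) (use dat dist in \<open>auto simp: d_def algebra_simps\<close>)
  thus ?thesis using dist by (simp add: d_def algebra_simps)
qed

lemma pert4:
  assumes o: "opt n xs J S" and dist: "a \<noteq> b" "a \<noteq> c" "a \<noteq> e" "b \<noteq> c" "b \<noteq> e" "c \<noteq> e"
    and dat: "\<forall>k\<in>{1..n}. da * max 0 (xs k - a) + db * max 0 (xs k - b) + dc * max 0 (xs k - c)
       + de * max 0 (xs k - e) = \<alpha> * xs k + \<beta>"
  shows "0 \<le> (\<bar>J a + da\<bar> - \<bar>J a\<bar>) * wt a + (\<bar>J b + db\<bar> - \<bar>J b\<bar>) * wt b + (\<bar>J c + dc\<bar> - \<bar>J c\<bar>) * wt c
     + (\<bar>J e + de\<bar> - \<bar>J e\<bar>) * wt e"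
proof -
  define d where "d = (\<lambda>_. 0::real)(a := da, b := db, c := dc, e := de)"
  have "0 \<le> (\<Sum>\<sigma>\<in>{a, b, c, e}. (\<bar>J \<sigma> + d \<sigma>\<bar> - \<bar>J \<sigma>\<bar>) * wt \<sigma>)"
    by (rule pert[OF o, of _ _ \<alpha> \<beta>]) (use dat dist in \<open>auto simp: d_def algebra_simps\<close>)
  thus ?thesis using dist by (simp add: d_def algebra_simps)
qed


definition nd :: "nat \<Rightarrow> (nat \<Rightarrow> real) \<Rightarrow> real \<Rightarrow> real \<Rightarrow> bool" where
  "nd n xs a b \<longleftrightarrow> (\<forall>k\<in>{1..n}. xs k \<le> a \<or> b \<le> xs k)"

lemma ab_le: "\<bar>x + d\<bar> - \<bar>x\<bar> \<le> \<bar>d::real\<bar>" by linarith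
lemma ab_dec_pos: "0 < e \<Longrightarrow> e \<le> x \<Longrightarrow> \<bar>x + - e\<bar> - \<bar>x\<bar> = - (e::real)" by linarith
lemma ab_dec_neg: "x < 0 \<Longrightarrow> 0 < e \<Longrightarrow> e \<le> - x \<Longrightarrow> \<bar>x + e\<bar> - \<bar>x\<bar> = - (e::real)" by linarith

lemma wt_diff_le: "wt a - wt b \<le> \<bar>a - b\<bar>" using wt_lip[of a b] by linarith

lemma SL:
  assumes o: "opt n xs J S" and ab: "a < \<tau>" "\<tau> < b" "b - a < 2" and ndab: "nd n xs a b"
    and pos: "J \<tau> > 0" and opp: "J a < 0 \<or> J b < 0"
  shows False
proof -
  define l where "l = (b - \<tau>) / (b - a)"
  have l0: "0 < l" and l1: "l < 1" using ab unfolding l_def by (auto simp: field_simps)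
  have leq: "l * (b - a) = b - \<tau>" using ab unfolding l_def by (auto simp: field_simps)
  have leq2: "(1 - l) * (b - a) = \<tau> - a" using leq by (simp add: algebra_simps)
  have dat: "\<forall>k\<in>{1..n}. (e * l) * max 0 (xs k - a) + (- e) * max 0 (xs k - \<tau>) + (e * (1 - l)) * max 0 (xs k - b)
     = 0 * xs k + 0" for e
  proof
    fix k assume k: "k \<in> {1..n}"
    show "(e * l) * max 0 (xs k - a) + (- e) * max 0 (xs k - \<tau>) + (e * (1 - l)) * max 0 (xs k - b) = 0 * xs k + 0"
    proof (cases "xs k \<le> a")
      case True thus ?thesis using ab by simp
    next
      case False
      hence x: "b \<le> xs k" using ndab k unfolding nd_def by auto
      have "(e * l) * (xs k - a) + (- e) * (xs k - \<tau>) + (e * (1 - l)) * (xs k - b) = e * (l * (b - a) - (b - \<tau>))"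
        by (simp add: algebra_simps)
      thus ?thesis using x ab leq by simp
    qed
  qed
  have wa: "wt b - wt \<tau> \<le> b - \<tau>" using wt_diff_le[of b \<tau>] ab by simp
  have wb: "wt a - wt \<tau> \<le> \<tau> - a" using wt_diff_le[of a \<tau>] ab by simp
  have wsum: "b - a < wt a + wt b" using wt_ge1[of a] wt_ge1[of b] ab by linarith
  from opp show False
  proof
    assume Ja: "J a < 0"
    define e where "e = min (J \<tau>) (- J a / l)"
    have e0: "0 < e" using pos Ja l0 unfolding e_def by (simp add: divide_neg_pos)
    have e1: "e \<le> J \<tau>" unfolding e_def by simp
    have e2: "e * l \<le> - J a" using l0 unfolding e_def by (simp add: min_def field_simps)
    have el0: "0 < e * l" using e0 l0 by simp
    have P: "0 \<le> (\<bar>J a + e * l\<bar> - \<bar>J a\<bar>) * wt a + (\<bar>J \<tau> + - e\<bar> - \<bar>J \<tau>\<bar>) * wt \<tau> + (\<bar>J b + e * (1 - l)\<bar> - \<bar>J b\<bar>) * wt b"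
      using pert3[OF o, of a \<tau> b "e * l" "- e" "e * (1 - l)" 0 0] ab dat[of e] by auto
    have t1: "\<bar>J a + e * l\<bar> - \<bar>J a\<bar> = - (e * l)" using ab_dec_neg[OF Ja el0 e2] .
    have t2: "\<bar>J \<tau> + - e\<bar> - \<bar>J \<tau>\<bar> = - e" using ab_dec_pos[OF e0 e1] .
    have t3: "(\<bar>J b + e * (1 - l)\<bar> - \<bar>J b\<bar>) * wt b \<le> (e * (1 - l)) * wt b"
      using ab_le[of "J b" "e * (1 - l)"] e0 l1 wt_pos[of b] by (intro mult_right_mono) auto
    have P': "0 \<le> (- (e * l)) * wt a + (- e) * wt \<tau> + (\<bar>J b + e * (1 - l)\<bar> - \<bar>J b\<bar>) * wt b"
      using P unfolding t1 t2 .
    have eq: "e * ((wt b - wt \<tau>) - l * (wt a + wt b)) = (- (e * l)) * wt a + (- e) * wt \<tau> + (e * (1 - l)) * wt b"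
      by (simp add: algebra_simps)
    have "0 \<le> e * ((wt b - wt \<tau>) - l * (wt a + wt b))"
      unfolding eq using P' t3 by linarith
    hence "0 \<le> (wt b - wt \<tau>) - l * (wt a + wt b)" using e0 by (simp add: zero_le_mult_iff)
    moreover have "l * (b - a) < l * (wt a + wt b)" using wsum l0 by simp
    ultimately show False using wa leq by linarith
  next
    assume Jb: "J b < 0"
    define e where "e = min (J \<tau>) (- J b / (1 - l))"
    have e0: "0 < e" using pos Jb l1 unfolding e_def by (simp add: divide_neg_pos)
    have e1: "e \<le> J \<tau>" unfolding e_def by simp
    have e2: "e * (1 - l) \<le> - J b" using l1 unfolding e_def by (simp add: min_def field_simps)
    have el0: "0 < e * (1 - l)" using e0 l1 by simp
    have P: "0 \<le> (\<bar>J a + e * l\<bar> - \<bar>J a\<bar>) * wt a + (\<bar>J \<tau> + - e\<bar> - \<bar>J \<tau>\<bar>) * wt \<tau> + (\<bar>J b + e * (1 - l)\<bar> - \<bar>J b\<bar>) * wt b"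
      using pert3[OF o, of a \<tau> b "e * l" "- e" "e * (1 - l)" 0 0] ab dat[of e] by auto
    have t1: "(\<bar>J a + e * l\<bar> - \<bar>J a\<bar>) * wt a \<le> (e * l) * wt a"
      using ab_le[of "J a" "e * l"] e0 l0 wt_pos[of a] by (intro mult_right_mono) auto
    have t2: "\<bar>J \<tau> + - e\<bar> - \<bar>J \<tau>\<bar> = - e" using ab_dec_pos[OF e0 e1] .
    have t3: "\<bar>J b + e * (1 - l)\<bar> - \<bar>J b\<bar> = - (e * (1 - l))" using ab_dec_neg[OF Jb el0 e2] .
    have P': "0 \<le> (\<bar>J a + e * l\<bar> - \<bar>J a\<bar>) * wt a + (- e) * wt \<tau> + (- (e * (1 - l))) * wt b"
      using P unfolding t2 t3 .
    have eq: "e * ((wt a - wt \<tau>) - (1 - l) * (wt a + wt b)) = (e * l) * wt a + (- e) * wt \<tau> + (- (e * (1 - l))) * wt b"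
      by (simp add: algebra_simps)
    have "0 \<le> e * ((wt a - wt \<tau>) - (1 - l) * (wt a + wt b))"
      unfolding eq using P' t1 by linarith
    hence "0 \<le> (wt a - wt \<tau>) - (1 - l) * (wt a + wt b)" using e0 by (simp add: zero_le_mult_iff)
    moreover have "(1 - l) * (b - a) < (1 - l) * (wt a + wt b)" using wsum l1 by simp
    ultimately show False using wb leq2 by linarith
  qed
qed


lemma X1:
  assumes o: "opt n xs J S" and pts: "p < \<tau>" "\<tau> < q" "q < \<tau>2" "\<tau>2 < r" and d1: "q - p < 1" "r - q < 1"
    and nd1: "nd n xs p q" and nd2: "nd n xs q r"
    and pos: "J \<tau> > 0" and neg: "J \<tau>2 < 0"
  shows False
proof -
  define l where "l = (q - \<tau>) / (q - p)"
  have l0: "0 < l" and l1: "l < 1" using pts unfolding l_def by (auto simp: field_simps)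
  have leq: "l * (q - p) = q - \<tau>" using pts unfolding l_def by (auto simp: field_simps)
  define K where "K = (1 - l) * (r - q) / (r - \<tau>2)"
  have K0: "0 < K" using l1 pts unfolding K_def by simp
  have Keq: "K * (r - \<tau>2) = (1 - l) * (r - q)" using pts unfolding K_def by simp
  have K1: "1 - l < K"
  proof -
    have "(1 - l) * (r - \<tau>2) < (1 - l) * (r - q)" using l1 pts by simp
    hence "(1 - l) * (r - \<tau>2) < K * (r - \<tau>2)" using Keq by simp
    thus ?thesis using pts by simp
  qed
  define e where "e = min (J \<tau>) (- J \<tau>2 / K)"
  have e0: "0 < e" using pos neg K0 unfolding e_def by (simp add: divide_neg_pos)
  have e1: "e \<le> J \<tau>" unfolding e_def by simp
  have e2: "e * K \<le> - J \<tau>2" using K0 unfolding e_def by (simp add: min_def field_simps)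
  have eK0: "0 < e * K" using e0 K0 by simp
  have dat: "\<forall>k\<in>{1..n}. (e * l) * max 0 (xs k - p) + (- e) * max 0 (xs k - \<tau>) + (e * K) * max 0 (xs k - \<tau>2)
       + (e * (1 - l) - e * K) * max 0 (xs k - r) = 0 * xs k + 0"
  proof
    fix k assume k: "k \<in> {1..n}"
    consider "xs k \<le> p" | "xs k = q" | "r \<le> xs k" using nd1 nd2 k unfolding nd_def by force
    thus "(e * l) * max 0 (xs k - p) + (- e) * max 0 (xs k - \<tau>) + (e * K) * max 0 (xs k - \<tau>2)
       + (e * (1 - l) - e * K) * max 0 (xs k - r) = 0 * xs k + 0"
    proof cases
      case 1 thus ?thesis using pts by simp
    next
      case 2
      have "(e * l) * (q - p) + (- e) * (q - \<tau>) = e * (l * (q - p) - (q - \<tau>))" by (simp add: algebra_simps)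
      thus ?thesis using 2 pts leq by simp
    next
      case 3
      have "(e * l) * (xs k - p) + (- e) * (xs k - \<tau>) + (e * K) * (xs k - \<tau>2) + (e * (1 - l) - e * K) * (xs k - r)
          = e * (K * (r - \<tau>2) - (1 - l) * (r - q)) + e * (l * (q - p) - (q - \<tau>))"
        by (simp add: algebra_simps)
      moreover have "max 0 (xs k - p) = xs k - p" "max 0 (xs k - \<tau>) = xs k - \<tau>"
        "max 0 (xs k - \<tau>2) = xs k - \<tau>2" "max 0 (xs k - r) = xs k - r" using 3 pts by auto
      moreover have "K * (r - \<tau>2) - (1 - l) * (r - q) = 0" "l * (q - p) - (q - \<tau>) = 0" using leq Keq by auto
      ultimately show ?thesis by simp
    qed
  qed
  have P: "0 \<le> (\<bar>J p + e * l\<bar> - \<bar>J p\<bar>) * wt p + (\<bar>J \<tau> + - e\<bar> - \<bar>J \<tau>\<bar>) * wt \<tau>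
      + (\<bar>J \<tau>2 + e * K\<bar> - \<bar>J \<tau>2\<bar>) * wt \<tau>2 + (\<bar>J r + (e * (1 - l) - e * K)\<bar> - \<bar>J r\<bar>) * wt r"
    using pert4[OF o, of p \<tau> \<tau>2 r "e * l" "- e" "e * K" "e * (1 - l) - e * K" 0 0] pts dat by auto
  have t1: "(\<bar>J p + e * l\<bar> - \<bar>J p\<bar>) * wt p \<le> (e * l) * wt p"
    using ab_le[of "J p" "e * l"] e0 l0 wt_pos[of p] by (intro mult_right_mono) auto
  have t2: "\<bar>J \<tau> + - e\<bar> - \<bar>J \<tau>\<bar> = - e" using ab_dec_pos[OF e0 e1] .
  have t3: "\<bar>J \<tau>2 + e * K\<bar> - \<bar>J \<tau>2\<bar> = - (e * K)" using ab_dec_neg[OF neg eK0 e2] .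
  have t4: "(\<bar>J r + (e * (1 - l) - e * K)\<bar> - \<bar>J r\<bar>) * wt r \<le> (e * K - e * (1 - l)) * wt r"
  proof -
    have "e * (1 - l) < e * K" using K1 e0 by simp
    hence "\<bar>e * (1 - l) - e * K\<bar> = e * K - e * (1 - l)" by simp
    thus ?thesis using ab_le[of "J r" "e * (1 - l) - e * K"] wt_pos[of r] by (intro mult_right_mono) auto
  qed
  have P': "0 \<le> (e * l) * wt p + (- e) * wt \<tau> + (- (e * K)) * wt \<tau>2 + (e * K - e * (1 - l)) * wt r"
    using P t1 t4 unfolding t2 t3 by linarith
  have eq: "(e * l) * wt p + (- e) * wt \<tau> + (- (e * K)) * wt \<tau>2 + (e * K - e * (1 - l)) * wt r
      = e * ((l * wt p - wt \<tau>) + K * (wt r - wt \<tau>2) - (1 - l) * wt r)"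
    by (simp add: algebra_simps)
  have "0 \<le> (l * wt p - wt \<tau>) + K * (wt r - wt \<tau>2) - (1 - l) * wt r"
    using P' e0 unfolding eq by (simp add: zero_le_mult_iff)
  moreover have "l * wt p - wt \<tau> < 0"
  proof -
    have "wt p - wt \<tau> \<le> \<tau> - p" using wt_diff_le[of p \<tau>] pts by simp
    moreover have "\<tau> - p = (1 - l) * (q - p)" using leq by (simp add: algebra_simps)
    moreover have "(1 - l) * (q - p) < (1 - l) * wt p" using d1 wt_ge1[of p] l1 by simp
    ultimately have "wt p - wt \<tau> < (1 - l) * wt p" by linarith
    thus ?thesis by (simp add: algebra_simps)
  qed
  moreover have "K * (wt r - wt \<tau>2) - (1 - l) * wt r < 0"
  proof -
    have "wt r - wt \<tau>2 \<le> r - \<tau>2" using wt_diff_le[of r \<tau>2] pts by simp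
    hence "K * (wt r - wt \<tau>2) \<le> K * (r - \<tau>2)" using K0 by simp
    moreover have "(1 - l) * (r - q) < (1 - l) * wt r" using d1 wt_ge1[of r] l1 by simp
    ultimately show ?thesis using Keq by linarith
  qed
  ultimately show False by linarith
qed


lemma L0a:
  assumes o: "opt n xs J S" and nz: "J \<tau> \<noteq> 0" and le: "\<forall>k\<in>{1..n}. \<tau> \<le> xs k"
  shows False
proof -
  have "0 \<le> (\<Sum>\<sigma>\<in>{\<tau>}. (\<bar>J \<sigma> + (\<lambda>_. - J \<tau>) \<sigma>\<bar> - \<bar>J \<sigma>\<bar>) * wt \<sigma>)"
  proof (rule pert[OF o, of _ _ "- J \<tau>" "J \<tau> * \<tau>"])
    show "\<forall>k\<in>{1..n}. (\<Sum>\<sigma>\<in>{\<tau>}. - J \<tau> * max 0 (xs k - \<sigma>)) = - J \<tau> * xs k + J \<tau> * \<tau>"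
      using le by (auto simp: algebra_simps)
  qed simp
  hence "0 \<le> - \<bar>J \<tau>\<bar> * wt \<tau>" by simp
  moreover have "0 < \<bar>J \<tau>\<bar> * wt \<tau>" using nz wt_pos[of \<tau>] by simp
  ultimately show False by linarith
qed

lemma L0b:
  assumes o: "opt n xs J S" and nz: "J \<tau> \<noteq> 0" and le: "\<forall>k\<in>{1..n}. xs k \<le> \<tau>"
  shows False
proof -
  have "0 \<le> (\<Sum>\<sigma>\<in>{\<tau>}. (\<bar>J \<sigma> + (\<lambda>_. - J \<tau>) \<sigma>\<bar> - \<bar>J \<sigma>\<bar>) * wt \<sigma>)"
  proof (rule pert[OF o, of _ _ 0 0])
    show "\<forall>k\<in>{1..n}. (\<Sum>\<sigma>\<in>{\<tau>}. - J \<tau> * max 0 (xs k - \<sigma>)) = 0 * xs k + 0"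
      using le by auto
  qed simp
  hence "0 \<le> - \<bar>J \<tau>\<bar> * wt \<tau>" by simp
  moreover have "0 < \<bar>J \<tau>\<bar> * wt \<tau>" using nz wt_pos[of \<tau>] by simp
  ultimately show False by linarith
qed

lemma L0c:
  assumes o: "opt n xs J S" and nz: "J \<tau> \<noteq> 0" and pts: "0 \<le> u" "u < \<tau>" "\<tau> < v"
    and dat0: "\<forall>k\<in>{1..n}. xs k = u \<or> v \<le> xs k"
  shows False
proof -
  define l where "l = (\<tau> - u) / (v - u)"
  have leq: "l * (v - u) = \<tau> - u" using pts unfolding l_def by simp
  have l0: "0 < l" using pts unfolding l_def by simp
  have dat: "\<forall>k\<in>{1..n}. (- J \<tau>) * max 0 (xs k - \<tau>) + (l * J \<tau>) * max 0 (xs k - v)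
     = (J \<tau> * (l - 1)) * xs k + J \<tau> * (\<tau> - l * v)"
  proof
    fix k assume k: "k \<in> {1..n}"
    show "(- J \<tau>) * max 0 (xs k - \<tau>) + (l * J \<tau>) * max 0 (xs k - v) = (J \<tau> * (l - 1)) * xs k + J \<tau> * (\<tau> - l * v)"
    proof (cases "xs k = u")
      case True
      have "(J \<tau> * (l - 1)) * u + J \<tau> * (\<tau> - l * v) = J \<tau> * ((\<tau> - u) - l * (v - u))" by (simp add: algebra_simps)
      thus ?thesis using True pts leq by simp
    next
      case False
      hence x: "v \<le> xs k" using dat0 k by auto
      have "max 0 (xs k - \<tau>) = xs k - \<tau>" "max 0 (xs k - v) = xs k - v" using x pts by auto
      thus ?thesis by (simp add: algebra_simps)
    qed
  qed
  have P: "0 \<le> (\<bar>J \<tau> + - J \<tau>\<bar> - \<bar>J \<tau>\<bar>) * wt \<tau> + (\<bar>J v + l * J \<tau>\<bar> - \<bar>J v\<bar>) * wt v"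
    using pert2[OF o, of \<tau> v "- J \<tau>" "l * J \<tau>"] pts dat by auto
  have t2: "(\<bar>J v + l * J \<tau>\<bar> - \<bar>J v\<bar>) * wt v \<le> \<bar>J \<tau>\<bar> * (l * wt v)"
  proof -
    have "\<bar>J v + l * J \<tau>\<bar> - \<bar>J v\<bar> \<le> l * \<bar>J \<tau>\<bar>" using ab_le[of "J v" "l * J \<tau>"] l0 by (simp add: abs_mult)
    hence "(\<bar>J v + l * J \<tau>\<bar> - \<bar>J v\<bar>) * wt v \<le> (l * \<bar>J \<tau>\<bar>) * wt v"
      using wt_pos[of v] by (intro mult_right_mono) auto
    thus ?thesis by (simp add: algebra_simps)
  qed
  have "l * wt v < wt \<tau>"
  proof -
    have "(\<tau> - u) * wt v < (v - u) * wt \<tau>" using wt_edge[OF pts] .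
    hence "l * (v - u) * wt v < (v - u) * wt \<tau>" using leq by simp
    thus ?thesis using pts by simp
  qed
  hence "\<bar>J \<tau>\<bar> * (l * wt v) < \<bar>J \<tau>\<bar> * wt \<tau>" using nz by simp
  thus False using P t2 by simp
qed

lemma L0d:
  assumes o: "opt n xs J S" and nz: "J \<tau> \<noteq> 0" and pts: "0 \<le> u" "u < \<tau>" "\<tau> < v"
    and dat0: "\<forall>k\<in>{1..n}. xs k \<le> u \<or> xs k = v"
  shows False
proof -
  define l where "l = (v - \<tau>) / (v - u)"
  have leq: "l * (v - u) = v - \<tau>" using pts unfolding l_def by simp
  have l0: "0 < l" and l1: "l < 1" using pts unfolding l_def by auto
  have dat: "\<forall>k\<in>{1..n}. (- J \<tau>) * max 0 (xs k - \<tau>) + (l * J \<tau>) * max 0 (xs k - u) = 0 * xs k + 0"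
  proof
    fix k assume k: "k \<in> {1..n}"
    show "(- J \<tau>) * max 0 (xs k - \<tau>) + (l * J \<tau>) * max 0 (xs k - u) = 0 * xs k + 0"
    proof (cases "xs k \<le> u")
      case True thus ?thesis using pts by simp
    next
      case False
      hence x: "xs k = v" using dat0 k by auto
      have "(- J \<tau>) * (v - \<tau>) + (l * J \<tau>) * (v - u) = J \<tau> * (l * (v - u) - (v - \<tau>))" by (simp add: algebra_simps)
      thus ?thesis using x pts leq by simp
    qed
  qed
  have P: "0 \<le> (\<bar>J \<tau> + - J \<tau>\<bar> - \<bar>J \<tau>\<bar>) * wt \<tau> + (\<bar>J u + l * J \<tau>\<bar> - \<bar>J u\<bar>) * wt u"
    by (rule pert2[OF o _ dat]) (use pts in simp)
  have t2: "(\<bar>J u + l * J \<tau>\<bar> - \<bar>J u\<bar>) * wt u \<le> \<bar>J \<tau>\<bar> * (l * wt u)"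
  proof -
    have "\<bar>J u + l * J \<tau>\<bar> - \<bar>J u\<bar> \<le> l * \<bar>J \<tau>\<bar>" using ab_le[of "J u" "l * J \<tau>"] l0 by (simp add: abs_mult)
    hence "(\<bar>J u + l * J \<tau>\<bar> - \<bar>J u\<bar>) * wt u \<le> (l * \<bar>J \<tau>\<bar>) * wt u"
      using wt_pos[of u] by (intro mult_right_mono) auto
    thus ?thesis by (simp add: algebra_simps)
  qed
  have "l * wt u < wt \<tau>"
  proof -
    have "wt u \<le> wt \<tau>" using wt_mono pts by simp
    moreover have "l * wt u < wt u" using l1 wt_pos[of u] by simp
    ultimately show ?thesis by linarith
  qed
  hence "\<bar>J \<tau>\<bar> * (l * wt u) < \<bar>J \<tau>\<bar> * wt \<tau>" using nz by simp
  thus False using P t2 by simp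
qed


lemma nd_sub: "nd n xs a b \<Longrightarrow> a \<le> a' \<Longrightarrow> b' \<le> b \<Longrightarrow> nd n xs a' b'"
  unfolding nd_def by force

lemma xs_lt:
  fixes xs :: "nat \<Rightarrow> real"
  assumes incr: "\<And>i. 1 \<le> i \<Longrightarrow> i < n \<Longrightarrow> xs i < xs (Suc i)"
  shows "1 \<le> a \<Longrightarrow> a < b \<Longrightarrow> b \<le> n \<Longrightarrow> xs a < xs b"
proof (induction b)
  case 0 thus ?case by simp
next
  case (Suc b)
  show ?case
  proof (cases "a = b")
    case True thus ?thesis using incr Suc.prems by simp
  next
    case False
    hence "xs a < xs b" using Suc by simp
    moreover have "xs b < xs (Suc b)" using incr Suc.prems False by simp
    ultimately show ?thesis by simp
  qed
qed

lemma xs_le: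
  fixes xs :: "nat \<Rightarrow> real"
  assumes incr: "\<And>i. 1 \<le> i \<Longrightarrow> i < n \<Longrightarrow> xs i < xs (Suc i)"
  shows "1 \<le> a \<Longrightarrow> a \<le> b \<Longrightarrow> b \<le> n \<Longrightarrow> xs a \<le> xs b"
  using xs_lt[of n xs, OF incr, of a b] by (cases "a = b") auto

lemma nd_seg:
  fixes xs :: "nat \<Rightarrow> real"
  assumes incr: "\<And>i. 1 \<le> i \<Longrightarrow> i < n \<Longrightarrow> xs i < xs (Suc i)"
  shows "1 \<le> j \<Longrightarrow> j < n \<Longrightarrow> nd n xs (xs j) (xs (Suc j))"
  unfolding nd_def
proof
  fix k assume j: "1 \<le> j" "j < n" and k: "k \<in> {1..n}"
  show "xs k \<le> xs j \<or> xs (Suc j) \<le> xs k"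
  proof (cases "k \<le> j")
    case True thus ?thesis using xs_le[of n xs, OF incr, of k j] k j by auto
  next
    case False thus ?thesis using xs_le[of n xs, OF incr, of "Suc j" k] k j by auto
  qed
qed

definition phi :: "real \<Rightarrow> real \<Rightarrow> real \<Rightarrow> real \<Rightarrow> real" where
  "phi l p q \<sigma> = (max 0 (q - \<sigma>) - max 0 (p - \<sigma>)) / (q - p) - (max 0 (p - \<sigma>) - max 0 (l - \<sigma>)) / (p - l)"

lemma phi_zero: "l < p \<Longrightarrow> p < q \<Longrightarrow> \<sigma> \<le> l \<or> q \<le> \<sigma> \<Longrightarrow> phi l p q \<sigma> = 0"
  unfolding phi_def by auto

lemma phi_pos: "l < p \<Longrightarrow> p < q \<Longrightarrow> l < \<sigma> \<Longrightarrow> \<sigma> < q \<Longrightarrow> 0 < phi l p q \<sigma>"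
proof (cases "\<sigma> \<le> p")
  case True
  assume a: "l < p" "p < q" "l < \<sigma>" "\<sigma> < q"
  have "(p - \<sigma>) / (p - l) < 1" using a True by simp
  moreover have "phi l p q \<sigma> = 1 - (p - \<sigma>) / (p - l)" unfolding phi_def using a True by auto
  ultimately show ?thesis by simp
next
  case False
  assume a: "l < p" "p < q" "l < \<sigma>" "\<sigma> < q"
  have "phi l p q \<sigma> = (q - \<sigma>) / (q - p)" unfolding phi_def using a False by auto
  thus ?thesis using a by simp
qed

definition Dj :: "(nat \<Rightarrow> real) \<Rightarrow> (real \<Rightarrow> real) \<Rightarrow> real set \<Rightarrow> nat \<Rightarrow> real" where
  "Dj xs J S j = (\<Sum>\<sigma>\<in>S. J \<sigma> * phi (xs (j - 1)) (xs j) (xs (Suc j)) \<sigma>)"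

lemma Dj_neg: "Dj xs (\<lambda>\<sigma>. - J \<sigma>) S j = - Dj xs J S j"
  unfolding Dj_def by (simp add: sum_negf)

lemma Dj_pos:
  assumes o: "opt n xs J S" and lp: "xs (j - 1) < xs j" and pq: "xs j < xs (Suc j)"
    and nn: "\<forall>\<sigma>. xs (j - 1) < \<sigma> \<and> \<sigma> < xs (Suc j) \<longrightarrow> 0 \<le> J \<sigma>"
    and \<tau>: "xs (j - 1) < \<tau>" "\<tau> < xs (Suc j)" "0 < J \<tau>"
  shows "0 < Dj xs J S j"
proof -
  have fin: "finite S" and z: "\<forall>\<sigma>. \<sigma> \<notin> S \<longrightarrow> J \<sigma> = 0" using o unfolding opt_def by auto
  have tS: "\<tau> \<in> S" using z \<tau> by force
  have tn: "0 \<le> J \<sigma> * phi (xs (j - 1)) (xs j) (xs (Suc j)) \<sigma>" for \<sigma>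
  proof (cases "xs (j - 1) < \<sigma> \<and> \<sigma> < xs (Suc j)")
    case True thus ?thesis using nn phi_pos[OF lp pq] by (simp add: less_imp_le)
  next
    case False thus ?thesis using phi_zero[OF lp pq, of \<sigma>] by auto
  qed
  have "Dj xs J S j = J \<tau> * phi (xs (j - 1)) (xs j) (xs (Suc j)) \<tau>
      + (\<Sum>\<sigma>\<in>S - {\<tau>}. J \<sigma> * phi (xs (j - 1)) (xs j) (xs (Suc j)) \<sigma>)"
    unfolding Dj_def using fin tS by (simp add: sum.remove)
  moreover have "0 \<le> (\<Sum>\<sigma>\<in>S - {\<tau>}. J \<sigma> * phi (xs (j - 1)) (xs j) (xs (Suc j)) \<sigma>)"
    using tn by (intro sum_nonneg) auto
  moreover have "0 < J \<tau> * phi (xs (j - 1)) (xs j) (xs (Suc j)) \<tau>" using \<tau> phi_pos[OF lp pq] by simp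
  ultimately show ?thesis by linarith
qed


lemma data_bounds:
  fixes xs :: "nat \<Rightarrow> real"
  assumes incr: "\<And>i. 1 \<le> i \<Longrightarrow> i < n \<Longrightarrow> xs i < xs (Suc i)"
    and pos: "0 < xs 1" and lt1: "xs n < 1"
  shows "1 \<le> k \<Longrightarrow> k \<le> n \<Longrightarrow> 0 < xs k \<and> xs k < 1"
  using xs_le[of n xs, OF incr, of 1 k] xs_le[of n xs, OF incr, of k n] pos lt1 by auto

lemma S1:
  fixes xs :: "nat \<Rightarrow> real"
  assumes incr: "\<And>i. 1 \<le> i \<Longrightarrow> i < n \<Longrightarrow> xs i < xs (Suc i)"
    and pos: "0 < xs 1" and lt1: "xs n < 1"
    and o: "opt n xs J S" and j: "2 \<le> j" "Suc j \<le> n" and Jp: "0 < J (xs j)"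
  shows "0 < Dj xs J S j"
proof -
  have sj: "Suc (j - 1) = j" using j by simp
  have lp: "xs (j - 1) < xs j" using xs_lt[of n xs, OF incr, of "j - 1" j] j by simp
  have pq: "xs j < xs (Suc j)" using incr j by simp
  have nd1: "nd n xs (xs (j - 1)) (xs j)" using nd_seg[of n xs, OF incr, of "j - 1"] j sj by simp
  have nd2: "nd n xs (xs j) (xs (Suc j))" using nd_seg[of n xs, OF incr, of j] j by simp
  have b1: "0 < xs (j - 1)" using data_bounds[OF incr pos lt1, of "j - 1"] j by simp
  have b2: "xs (Suc j) < 1" using data_bounds[OF incr pos lt1, of "Suc j"] j by simp
  have on: "opt n xs (\<lambda>\<sigma>. - J \<sigma>) S" using opt_neg[OF o] .
  have nn: "\<forall>\<sigma>. xs (j - 1) < \<sigma> \<and> \<sigma> < xs (Suc j) \<longrightarrow> 0 \<le> J \<sigma>"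
  proof (intro allI impI, rule ccontr)
    fix \<sigma> assume s: "xs (j - 1) < \<sigma> \<and> \<sigma> < xs (Suc j)" and "\<not> 0 \<le> J \<sigma>"
    hence neg: "J \<sigma> < 0" by simp
    consider "\<sigma> < xs j" | "\<sigma> = xs j" | "xs j < \<sigma>" by linarith
    thus False
    proof cases
      case 1
      show False using SL[OF on, of "xs (j - 1)" \<sigma> "xs j"] s 1 nd1 neg Jp b1 b2 lp pq by auto
    next
      case 2 thus False using neg Jp by simp
    next
      case 3
      show False using SL[OF on, of "xs j" \<sigma> "xs (Suc j)"] s 3 nd2 neg Jp b1 b2 lp pq by auto
    qed
  qed
  show ?thesis using Dj_pos[OF o lp pq nn, of "xs j"] lp pq Jp by simp
qed

lemma S2:
  fixes xs :: "nat \<Rightarrow> real"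
  assumes incr: "\<And>i. 1 \<le> i \<Longrightarrow> i < n \<Longrightarrow> xs i < xs (Suc i)"
    and pos: "0 < xs 1" and lt1: "xs n < 1"
    and o: "opt n xs J S" and j: "1 \<le> j" "Suc j \<le> n" and \<tau>: "xs j < \<tau>" "\<tau> < xs (Suc j)"
    and Jp: "0 < J \<tau>"
  shows "(2 \<le> j \<longrightarrow> 0 < Dj xs J S j) \<and> (Suc (Suc j) \<le> n \<longrightarrow> 0 < Dj xs J S (Suc j))"
proof -
  have pq: "xs j < xs (Suc j)" using incr j by simp
  have nd2: "nd n xs (xs j) (xs (Suc j))" using nd_seg[of n xs, OF incr, of j] j by simp
  have b1: "0 < xs j" using data_bounds[OF incr pos lt1, of j] j by simp
  have b2: "xs (Suc j) < 1" using data_bounds[OF incr pos lt1, of "Suc j"] j by simp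
  have on: "opt n xs (\<lambda>\<sigma>. - J \<sigma>) S" using opt_neg[OF o] .
  have mid: "0 \<le> J \<sigma>" if s: "xs j < \<sigma>" "\<sigma> \<le> xs (Suc j)" for \<sigma>
  proof (rule ccontr)
    assume "\<not> 0 \<le> J \<sigma>"
    hence neg: "J \<sigma> < 0" by simp
    consider "\<sigma> < \<tau>" | "\<sigma> = \<tau>" | "\<tau> < \<sigma>" by linarith
    thus False
    proof cases
      case 1
      have "nd n xs (xs j) \<tau>" using nd_sub[OF nd2, of "xs j" \<tau>] \<tau> by simp
      thus False using SL[OF on, of "xs j" \<sigma> \<tau>] s 1 neg Jp b1 b2 \<tau> by auto
    next
      case 2 thus False using neg Jp by simp
    next
      case 3
      have "nd n xs (xs j) \<sigma>" using nd_sub[OF nd2, of "xs j" \<sigma>] s by simp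
      thus False using SL[OF o, of "xs j" \<tau> \<sigma>] s 3 neg Jp b1 b2 \<tau> by auto
    qed
  qed
  have part1: "0 < Dj xs J S j" if j2: "2 \<le> j"
  proof -
    have sj: "Suc (j - 1) = j" using j2 by simp
    have lp: "xs (j - 1) < xs j" using xs_lt[of n xs, OF incr, of "j - 1" j] j j2 by simp
    have nd1: "nd n xs (xs (j - 1)) (xs j)" using nd_seg[of n xs, OF incr, of "j - 1"] j j2 sj by simp
    have b0: "0 < xs (j - 1)" using data_bounds[OF incr pos lt1, of "j - 1"] j j2 by simp
    have nn: "\<forall>\<sigma>. xs (j - 1) < \<sigma> \<and> \<sigma> < xs (Suc j) \<longrightarrow> 0 \<le> J \<sigma>"
    proof (intro allI impI, rule ccontr)
      fix \<sigma> assume s: "xs (j - 1) < \<sigma> \<and> \<sigma> < xs (Suc j)" and "\<not> 0 \<le> J \<sigma>"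
      hence neg: "J \<sigma> < 0" by simp
      consider "\<sigma> < xs j" | "\<sigma> = xs j" | "xs j < \<sigma>" by linarith
      thus False
      proof cases
        case 1
        show False using X1[OF on, of "xs (j - 1)" \<sigma> "xs j" \<tau> "xs (Suc j)"] s 1 nd1 nd2 neg Jp b0 b2 \<tau> lp
          by auto
      next
        case 2
        show False using SL[OF o, of "xs j" \<tau> "xs (Suc j)"] 2 nd2 neg Jp b1 b2 \<tau> by auto
      next
        case 3 thus False using mid[of \<sigma>] s neg by simp
      qed
    qed
    show ?thesis using Dj_pos[OF o lp pq nn, of \<tau>] lp \<tau> Jp by simp
  qed
  have part2: "0 < Dj xs J S (Suc j)" if j3: "Suc (Suc j) \<le> n"
  proof -
    have qr: "xs (Suc j) < xs (Suc (Suc j))" using incr j j3 by simp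
    have nd3: "nd n xs (xs (Suc j)) (xs (Suc (Suc j)))" using nd_seg[of n xs, OF incr, of "Suc j"] j j3 by simp
    have b3: "xs (Suc (Suc j)) < 1" using data_bounds[OF incr pos lt1, of "Suc (Suc j)"] j3 by simp
    have nn: "\<forall>\<sigma>. xs j < \<sigma> \<and> \<sigma> < xs (Suc (Suc j)) \<longrightarrow> 0 \<le> J \<sigma>"
    proof (intro allI impI, rule ccontr)
      fix \<sigma> assume s: "xs j < \<sigma> \<and> \<sigma> < xs (Suc (Suc j))" and "\<not> 0 \<le> J \<sigma>"
      hence neg: "J \<sigma> < 0" by simp
      show False
      proof (cases "\<sigma> \<le> xs (Suc j)")
        case True thus False using mid[of \<sigma>] s neg by simp
      next
        case False
        show False using X1[OF o, of "xs j" \<tau> "xs (Suc j)" \<sigma> "xs (Suc (Suc j))"] s False nd2 nd3 neg Jp b1 b3 \<tau>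
          by auto
      qed
    qed
    show ?thesis using Dj_pos[of n xs J S "Suc j" \<tau>] o pq \<tau> Jp qr nn by simp
  qed
  show ?thesis using part1 part2 by blast
qed


definition E :: "real \<Rightarrow> real \<Rightarrow> real \<Rightarrow> real \<Rightarrow> real" where
  "E p q t \<sigma> = max 0 (t - \<sigma>) - max 0 (p - \<sigma>) - (max 0 (q - \<sigma>) - max 0 (p - \<sigma>)) / (q - p) * (t - p)"

lemma E_num:
  assumes "p < q"
  shows "E p q t \<sigma> = ((q - p) * (max 0 (t - \<sigma>) - max 0 (p - \<sigma>)) - (max 0 (q - \<sigma>) - max 0 (p - \<sigma>)) * (t - p)) / (q - p)"
  using assms unfolding E_def by (simp add: field_simps)

lemma E_chord:
  assumes pq: "p < q" and t: "p \<le> t" "t \<le> q"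
  shows "E p q t \<sigma> \<le> 0" and "\<sigma> \<le> p \<or> q \<le> \<sigma> \<Longrightarrow> E p q t \<sigma> = 0"
proof -
  define N where "N = (q - p) * (max 0 (t - \<sigma>) - max 0 (p - \<sigma>)) - (max 0 (q - \<sigma>) - max 0 (p - \<sigma>)) * (t - p)"
  have EN: "E p q t \<sigma> = N / (q - p)" unfolding N_def using E_num[OF pq] .
  have z: "N = 0" if "\<sigma> \<le> p \<or> q \<le> \<sigma>"
  proof (cases "\<sigma> \<le> p")
    case True
    hence "max 0 (t - \<sigma>) = t - \<sigma>" "max 0 (p - \<sigma>) = p - \<sigma>" "max 0 (q - \<sigma>) = q - \<sigma>" using t pq by auto
    thus ?thesis unfolding N_def by (simp add: algebra_simps)
  next
    case False
    hence "q \<le> \<sigma>" using that by simp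
    hence "max 0 (t - \<sigma>) = 0" "max 0 (p - \<sigma>) = 0" "max 0 (q - \<sigma>) = 0" using t pq by auto
    thus ?thesis unfolding N_def by simp
  qed
  have "N \<le> 0"
  proof (cases "\<sigma> \<le> p \<or> q \<le> \<sigma>")
    case True thus ?thesis using z by simp
  next
    case False
    hence s: "p < \<sigma>" "\<sigma> < q" by auto
    show ?thesis
    proof (cases "t \<le> \<sigma>")
      case True
      hence "max 0 (t - \<sigma>) = 0" "max 0 (p - \<sigma>) = 0" "max 0 (q - \<sigma>) = q - \<sigma>" using s by auto
      hence "N = - ((q - \<sigma>) * (t - p))" unfolding N_def by simp
      moreover have "0 \<le> (q - \<sigma>) * (t - p)" using s t by simp
      ultimately show ?thesis by simp
    next
      case False
      hence "max 0 (t - \<sigma>) = t - \<sigma>" "max 0 (p - \<sigma>) = 0" "max 0 (q - \<sigma>) = q - \<sigma>" using s by auto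
      hence "N = (\<sigma> - p) * (t - q)" unfolding N_def by (simp add: algebra_simps)
      moreover have "(\<sigma> - p) * (t - q) \<le> 0" using s t by (simp add: mult_nonneg_nonpos)
      ultimately show ?thesis by simp
    qed
  qed
  thus "E p q t \<sigma> \<le> 0" unfolding EN using pq by (simp add: divide_nonpos_pos)
  show "\<sigma> \<le> p \<or> q \<le> \<sigma> \<Longrightarrow> E p q t \<sigma> = 0" unfolding EN using z by simp
qed

lemma E_left:
  assumes qr: "q < r" and t: "t \<le> q"
  shows "0 \<le> E q r t \<sigma>" and "\<sigma> \<le> t \<or> r \<le> \<sigma> \<Longrightarrow> E q r t \<sigma> = 0"
proof -
  define N where "N = (r - q) * (max 0 (t - \<sigma>) - max 0 (q - \<sigma>)) - (max 0 (r - \<sigma>) - max 0 (q - \<sigma>)) * (t - q)"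
  have EN: "E q r t \<sigma> = N / (r - q)" unfolding N_def using E_num[OF qr] .
  have z: "N = 0" if "\<sigma> \<le> t \<or> r \<le> \<sigma>"
  proof (cases "\<sigma> \<le> t")
    case True
    hence "max 0 (t - \<sigma>) = t - \<sigma>" "max 0 (q - \<sigma>) = q - \<sigma>" "max 0 (r - \<sigma>) = r - \<sigma>" using t qr by auto
    thus ?thesis unfolding N_def by (simp add: algebra_simps)
  next
    case False
    hence "r \<le> \<sigma>" using that by simp
    hence "max 0 (t - \<sigma>) = 0" "max 0 (q - \<sigma>) = 0" "max 0 (r - \<sigma>) = 0" using t qr by auto
    thus ?thesis unfolding N_def by simp
  qed
  have "0 \<le> N"
  proof (cases "\<sigma> \<le> t \<or> r \<le> \<sigma>")
    case True thus ?thesis using z by simp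
  next
    case False
    hence s: "t < \<sigma>" "\<sigma> < r" by auto
    show ?thesis
    proof (cases "\<sigma> \<le> q")
      case True
      hence "max 0 (t - \<sigma>) = 0" "max 0 (q - \<sigma>) = q - \<sigma>" "max 0 (r - \<sigma>) = r - \<sigma>" using s by auto
      hence "N = (r - q) * (\<sigma> - t)" unfolding N_def by (simp add: algebra_simps)
      moreover have "0 \<le> (r - q) * (\<sigma> - t)" using s qr by simp
      ultimately show ?thesis by simp
    next
      case False
      hence "max 0 (t - \<sigma>) = 0" "max 0 (q - \<sigma>) = 0" "max 0 (r - \<sigma>) = r - \<sigma>" using s t by auto
      hence "N = (r - \<sigma>) * (q - t)" unfolding N_def by (simp add: algebra_simps)
      moreover have "0 \<le> (r - \<sigma>) * (q - t)" using s t by simp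
      ultimately show ?thesis by simp
    qed
  qed
  thus "0 \<le> E q r t \<sigma>" unfolding EN using qr by simp
  show "\<sigma> \<le> t \<or> r \<le> \<sigma> \<Longrightarrow> E q r t \<sigma> = 0" unfolding EN using z by simp
qed

lemma E_right:
  assumes lp: "l < p" and t: "p \<le> t"
  shows "0 \<le> E l p t \<sigma>" and "\<sigma> \<le> l \<or> t \<le> \<sigma> \<Longrightarrow> E l p t \<sigma> = 0"
proof -
  define N where "N = (p - l) * (max 0 (t - \<sigma>) - max 0 (l - \<sigma>)) - (max 0 (p - \<sigma>) - max 0 (l - \<sigma>)) * (t - l)"
  have EN: "E l p t \<sigma> = N / (p - l)" unfolding N_def using E_num[OF lp] .
  have z: "N = 0" if "\<sigma> \<le> l \<or> t \<le> \<sigma>"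
  proof (cases "\<sigma> \<le> l")
    case True
    hence "max 0 (t - \<sigma>) = t - \<sigma>" "max 0 (l - \<sigma>) = l - \<sigma>" "max 0 (p - \<sigma>) = p - \<sigma>" using t lp by auto
    thus ?thesis unfolding N_def by (simp add: algebra_simps)
  next
    case False
    hence "t \<le> \<sigma>" using that by simp
    hence "max 0 (t - \<sigma>) = 0" "max 0 (l - \<sigma>) = 0" "max 0 (p - \<sigma>) = 0" using t lp by auto
    thus ?thesis unfolding N_def by simp
  qed
  have "0 \<le> N"
  proof (cases "\<sigma> \<le> l \<or> t \<le> \<sigma>")
    case True thus ?thesis using z by simp
  next
    case False
    hence s: "l < \<sigma>" "\<sigma> < t" by auto
    show ?thesis
    proof (cases "\<sigma> \<le> p")
      case True
      hence "max 0 (t - \<sigma>) = t - \<sigma>" "max 0 (l - \<sigma>) = 0" "max 0 (p - \<sigma>) = p - \<sigma>" using s by auto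
      hence "N = (\<sigma> - l) * (t - p)" unfolding N_def by (simp add: algebra_simps)
      moreover have "0 \<le> (\<sigma> - l) * (t - p)" using s t by simp
      ultimately show ?thesis by simp
    next
      case False
      hence "max 0 (t - \<sigma>) = t - \<sigma>" "max 0 (l - \<sigma>) = 0" "max 0 (p - \<sigma>) = 0" using s lp by auto
      hence "N = (p - l) * (t - \<sigma>)" unfolding N_def by simp
      moreover have "0 \<le> (p - l) * (t - \<sigma>)" using s lp by simp
      ultimately show ?thesis by simp
    qed
  qed
  thus "0 \<le> E l p t \<sigma>" unfolding EN using lp by simp
  show "\<sigma> \<le> l \<or> t \<le> \<sigma> \<Longrightarrow> E l p t \<sigma> = 0" unfolding EN using z by simp
qed

lemma fE:
  assumes f: "\<forall>x. fhat x = \<alpha> * x + \<beta> + kf J S x"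
    and yj: "ys j = fhat (xs j)" and yj1: "ys (Suc j) = fhat (xs (Suc j))" and lt: "xs j < xs (Suc j)"
  shows "fhat t - seg_line xs ys j t = (\<Sum>\<sigma>\<in>S. J \<sigma> * E (xs j) (xs (Suc j)) t \<sigma>)"
proof -
  define p where "p = xs j"
  define q where "q = xs (Suc j)"
  have pq: "p < q" using lt unfolding p_def q_def .
  have "(\<Sum>\<sigma>\<in>S. J \<sigma> * E p q t \<sigma>) = (\<Sum>\<sigma>\<in>S. J \<sigma> * max 0 (t - \<sigma>) - J \<sigma> * max 0 (p - \<sigma>)
       - (J \<sigma> * max 0 (q - \<sigma>) - J \<sigma> * max 0 (p - \<sigma>)) / (q - p) * (t - p))"
    unfolding E_def by (intro sum.cong) (auto simp: algebra_simps)
  also have "\<dots> = kf J S t - kf J S p - (kf J S q - kf J S p) / (q - p) * (t - p)"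
    unfolding kf_def by (simp add: sum_subtractf sum_divide_distrib[symmetric] sum_distrib_right[symmetric])
  finally have s: "(\<Sum>\<sigma>\<in>S. J \<sigma> * E p q t \<sigma>) = kf J S t - kf J S p - (kf J S q - kf J S p) / (q - p) * (t - p)" .
  have "fhat t - seg_line xs ys j t = (\<alpha> * t + \<beta> + kf J S t) - ((\<alpha> * p + \<beta> + kf J S p)
      + ((\<alpha> * q + \<beta> + kf J S q) - (\<alpha> * p + \<beta> + kf J S p)) / (q - p) * (t - p))"
    unfolding seg_line_def yj yj1 p_def[symmetric] q_def[symmetric] using f by simp
  also have "((\<alpha> * q + \<beta> + kf J S q) - (\<alpha> * p + \<beta> + kf J S p)) / (q - p) = \<alpha> + (kf J S q - kf J S p) / (q - p)"
    using pq by (simp add: field_simps)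
  finally have "fhat t - seg_line xs ys j t = kf J S t - kf J S p - (kf J S q - kf J S p) / (q - p) * (t - p)"
    by (simp add: algebra_simps)
  thus ?thesis using s unfolding p_def q_def by simp
qed


lemma E_lin: "p < q \<Longrightarrow> \<sigma> \<le> p \<Longrightarrow> \<sigma> \<le> t \<Longrightarrow> E p q t \<sigma> = 0"
proof -
  assume a: "p < q" "\<sigma> \<le> p" "\<sigma> \<le> t"
  hence "max 0 (t - \<sigma>) = t - \<sigma>" "max 0 (p - \<sigma>) = p - \<sigma>" "max 0 (q - \<sigma>) = q - \<sigma>" by auto
  thus ?thesis unfolding E_def using a by simp
qed

lemma E_hi: "q \<le> \<sigma> \<Longrightarrow> p \<le> \<sigma> \<Longrightarrow> t \<le> \<sigma> \<Longrightarrow> E p q t \<sigma> = 0"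
  unfolding E_def by simp

lemma fin1:
  fixes F A B C v :: real
  shows "B \<le> F \<Longrightarrow> F \<le> A \<Longrightarrow> C \<le> F \<Longrightarrow> \<bar>F - v\<bar> \<le> max \<bar>A - v\<bar> (min \<bar>B - v\<bar> \<bar>C - v\<bar>)"
  by (auto simp: max_def min_def abs_if)

lemma fin2:
  fixes F A B C v :: real
  shows "A \<le> F \<Longrightarrow> F \<le> B \<Longrightarrow> F \<le> C \<Longrightarrow> \<bar>F - v\<bar> \<le> max \<bar>A - v\<bar> (min \<bar>B - v\<bar> \<bar>C - v\<bar>)"
  by (auto simp: max_def min_def abs_if)


theorem lemma8:
  fixes n :: nat and xs ys :: "nat \<Rightarrow> real"
    and fstar fhat :: "real \<Rightarrow> real"
  assumes n2: "2 \<le> n"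
    and pos: "0 < xs 1" and lt1: "xs n < 1"
    and incr: "\<And>i. 1 \<le> i \<Longrightarrow> i < n \<Longrightarrow> xs i < xs (Suc i)"
    and fhat: "min_norm_interpolant n xs ys fhat"
  shows "(\<forall>i\<in>{2..n-2}. \<forall>t. xs i \<le> t \<and> t < xs (Suc i) \<longrightarrow>
            \<bar>fhat t - fstar t\<bar> \<le> max \<bar>seg_line xs ys i t - fstar t\<bar>
               (min \<bar>seg_line xs ys (Suc i) t - fstar t\<bar> \<bar>seg_line xs ys (i - 1) t - fstar t\<bar>))
       \<and> (\<forall>t. 0 \<le> t \<and> t < xs 2 \<longrightarrow> \<bar>fhat t - fstar t\<bar> = \<bar>seg_line xs ys 1 t - fstar t\<bar>)
       \<and> (\<forall>t. xs (n - 1) \<le> t \<and> t \<le> 1 \<longrightarrow> \<bar>fhat t - fstar t\<bar> = \<bar>seg_line xs ys (n - 1) t - fstar t\<bar>)"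
proof -
  obtain J S \<alpha> \<beta> where o: "opt n xs J S" and f: "\<forall>x. fhat x = \<alpha> * x + \<beta> + kf J S x"
    using min_opt[OF fhat] by blast
  have fin: "finite S" and z: "\<forall>\<sigma>. \<sigma> \<notin> S \<longrightarrow> J \<sigma> = 0" using o unfolding opt_def by auto
  have on: "opt n xs (\<lambda>\<sigma>. - J \<sigma>) S" using opt_neg[OF o] .
  have ysk: "ys k = fhat (xs k)" if "1 \<le> k" "k \<le> n" for k
  proof -
    obtain \<theta> a0 b0 where "interpolates n xs ys \<theta> a0 b0" "fhat = relu_net \<theta> a0 b0"
      using fhat unfolding min_norm_interpolant_def by blast
    thus ?thesis using that unfolding interpolates_def by auto
  qed
  have xle: "xs a \<le> xs b" if "1 \<le> a" "a \<le> b" "b \<le> n" for a b using xs_le[of n xs, OF incr] that by blast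
  have xlt: "xs a < xs b" if "1 \<le> a" "a < b" "b \<le> n" for a b using xs_lt[of n xs, OF incr] that by blast
  have x0: "0 \<le> xs k" if "1 \<le> k" "k \<le> n" for k using data_bounds[OF incr pos lt1, of k] that by simp
  have x12: "xs 1 < xs 2" using xlt[of 1 2] n2 by simp
  have Jlo: "xs 2 \<le> \<sigma>" if nz: "J \<sigma> \<noteq> 0" for \<sigma>
  proof (rule ccontr)
    assume "\<not> xs 2 \<le> \<sigma>"
    hence s: "\<sigma> < xs 2" by simp
    show False
    proof (cases "\<sigma> \<le> xs 1")
      case True
      have "\<forall>k\<in>{1..n}. \<sigma> \<le> xs k" using True xle[of 1] by force
      thus False using L0a[OF o nz] by blast
    next
      case False
      have "\<forall>k\<in>{1..n}. xs k = xs 1 \<or> xs 2 \<le> xs k"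
      proof
        fix k assume k: "k \<in> {1..n}"
        show "xs k = xs 1 \<or> xs 2 \<le> xs k"
        proof (cases "k = 1")
          case True thus ?thesis by simp
        next
          case False thus ?thesis using xle[of 2 k] k by auto
        qed
      qed
      thus False using L0c[OF o nz, of "xs 1" "xs 2"] False s pos by auto
    qed
  qed
  have Jhi: "\<sigma> \<le> xs (n - 1)" if nz: "J \<sigma> \<noteq> 0" for \<sigma>
  proof (rule ccontr)
    assume "\<not> \<sigma> \<le> xs (n - 1)"
    hence s: "xs (n - 1) < \<sigma>" by simp
    show False
    proof (cases "xs n \<le> \<sigma>")
      case True
      have "\<forall>k\<in>{1..n}. xs k \<le> \<sigma>" using True xle[of _ n] by force
      thus False using L0b[OF o nz] by blast
    next
      case False
      have "\<forall>k\<in>{1..n}. xs k \<le> xs (n - 1) \<or> xs k = xs n"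
      proof
        fix k assume k: "k \<in> {1..n}"
        show "xs k \<le> xs (n - 1) \<or> xs k = xs n"
        proof (cases "k = n")
          case True thus ?thesis by simp
        next
          case False thus ?thesis using xle[of k "n - 1"] k by auto
        qed
      qed
      moreover have "0 \<le> xs (n - 1)" using x0[of "n - 1"] n2 by simp
      ultimately show False using L0d[OF o nz, of "xs (n - 1)" "xs n"] False s by auto
    qed
  qed
  have part2: "\<forall>t. 0 \<le> t \<and> t < xs 2 \<longrightarrow> \<bar>fhat t - fstar t\<bar> = \<bar>seg_line xs ys 1 t - fstar t\<bar>"
  proof (intro allI impI)
    fix t assume t: "0 \<le> t \<and> t < xs 2"
    have "fhat t - seg_line xs ys 1 t = (\<Sum>\<sigma>\<in>S. J \<sigma> * E (xs 1) (xs (Suc 1)) t \<sigma>)"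
      by (rule fE[OF f]) (use ysk[of 1] ysk[of 2] n2 x12 in \<open>auto simp: numeral_2_eq_2\<close>)
    also have "\<dots> = 0"
    proof (intro sum.neutral ballI)
      fix \<sigma> assume "\<sigma> \<in> S"
      show "J \<sigma> * E (xs 1) (xs (Suc 1)) t \<sigma> = 0"
      proof (cases "J \<sigma> = 0")
        case False
        hence "xs 2 \<le> \<sigma>" using Jlo by blast
        hence "E (xs 1) (xs (Suc 1)) t \<sigma> = 0" using E_hi[of "xs (Suc 1)" \<sigma> "xs 1" t] t x12 by (simp add: numeral_2_eq_2)
        thus ?thesis by simp
      qed simp
    qed
    finally show "\<bar>fhat t - fstar t\<bar> = \<bar>seg_line xs ys 1 t - fstar t\<bar>" by simp
  qed
  have part3: "\<forall>t. xs (n - 1) \<le> t \<and> t \<le> 1 \<longrightarrow> \<bar>fhat t - fstar t\<bar> = \<bar>seg_line xs ys (n - 1) t - fstar t\<bar>"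
  proof (intro allI impI)
    fix t assume t: "xs (n - 1) \<le> t \<and> t \<le> 1"
    have sn: "Suc (n - 1) = n" using n2 by simp
    have lt: "xs (n - 1) < xs (Suc (n - 1))" using incr[of "n - 1"] n2 by simp
    have "fhat t - seg_line xs ys (n - 1) t = (\<Sum>\<sigma>\<in>S. J \<sigma> * E (xs (n - 1)) (xs (Suc (n - 1))) t \<sigma>)"
      by (rule fE[OF f _ _ lt]) (use ysk[of "n - 1"] ysk[of n] n2 sn in auto)
    also have "\<dots> = 0"
    proof (intro sum.neutral ballI)
      fix \<sigma> assume "\<sigma> \<in> S"
      show "J \<sigma> * E (xs (n - 1)) (xs (Suc (n - 1))) t \<sigma> = 0"
      proof (cases "J \<sigma> = 0")
        case False
        hence "\<sigma> \<le> xs (n - 1)" using Jhi by blast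
        hence "E (xs (n - 1)) (xs (Suc (n - 1))) t \<sigma> = 0" using E_lin[OF lt] t by simp
        thus ?thesis by simp
      qed simp
    qed
    finally show "\<bar>fhat t - fstar t\<bar> = \<bar>seg_line xs ys (n - 1) t - fstar t\<bar>" by simp
  qed
  have part1: "\<bar>fhat t - fstar t\<bar> \<le> max \<bar>seg_line xs ys i t - fstar t\<bar>
               (min \<bar>seg_line xs ys (Suc i) t - fstar t\<bar> \<bar>seg_line xs ys (i - 1) t - fstar t\<bar>)"
    if i: "i \<in> {2..n-2}" and t: "xs i \<le> t" "t < xs (Suc i)" for i t
  proof -
    have i2: "2 \<le> i" and in2: "Suc (Suc i) \<le> n" using i n2 by auto
    have si: "Suc (i - 1) = i" using i2 by simp
    have i1: "1 \<le> i - 1" using i2 by simp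
    define l where "l = xs (i - 1)"
    define p where "p = xs i"
    define q where "q = xs (Suc i)"
    define r where "r = xs (Suc (Suc i))"
    have lp: "l < p" unfolding l_def p_def using xlt[of "i - 1" i] i2 in2 by simp
    have pq: "p < q" unfolding p_def q_def using incr[of i] i2 in2 by simp
    have qr: "q < r" unfolding q_def r_def using incr[of "Suc i"] i2 in2 by simp
    have FA: "fhat t - seg_line xs ys i t = (\<Sum>\<sigma>\<in>S. J \<sigma> * E p q t \<sigma>)"
      unfolding p_def q_def by (rule fE[OF f]) (use ysk[of i] ysk[of "Suc i"] i2 in2 pq p_def q_def in auto)
    have FB: "fhat t - seg_line xs ys (Suc i) t = (\<Sum>\<sigma>\<in>S. J \<sigma> * E q r t \<sigma>)"
      unfolding q_def r_def by (rule fE[OF f]) (use ysk[of "Suc i"] ysk[of "Suc (Suc i)"] i2 in2 qr q_def r_def in auto)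
    have FC: "fhat t - seg_line xs ys (i - 1) t = (\<Sum>\<sigma>\<in>S. J \<sigma> * E l p t \<sigma>)"
    proof -
      have "fhat t - seg_line xs ys (i - 1) t = (\<Sum>\<sigma>\<in>S. J \<sigma> * E (xs (i - 1)) (xs (Suc (i - 1))) t \<sigma>)"
        by (rule fE[OF f]) (use ysk[of "i - 1"] ysk[of i] i2 in2 lp si l_def p_def in auto)
      thus ?thesis unfolding si l_def p_def .
    qed
    have tp: "p \<le> t" and tq: "t < q" using t unfolding p_def q_def by auto
    define F where "F = fhat t"
    define A where "A = seg_line xs ys i t"
    define B where "B = seg_line xs ys (Suc i) t"
    define C where "C = seg_line xs ys (i - 1) t"
    have S1n: "0 < Dj xs (\<lambda>\<sigma>. - J \<sigma>) S j" if "2 \<le> j" "Suc j \<le> n" "J (xs j) < 0" for j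
      using S1[OF incr pos lt1 on that(1,2)] that(3) by simp
    have S1p: "0 < Dj xs J S j" if "2 \<le> j" "Suc j \<le> n" "0 < J (xs j)" for j
      using S1[OF incr pos lt1 o that] .
    have S2n: "(2 \<le> j \<longrightarrow> 0 < Dj xs (\<lambda>\<sigma>. - J \<sigma>) S j) \<and> (Suc (Suc j) \<le> n \<longrightarrow> 0 < Dj xs (\<lambda>\<sigma>. - J \<sigma>) S (Suc j))"
      if "1 \<le> j" "Suc j \<le> n" "xs j < \<sigma>" "\<sigma> < xs (Suc j)" "J \<sigma> < 0" for j \<sigma>
      using S2[OF incr pos lt1 on that(1-4)] that(5) by simp
    have S2p: "(2 \<le> j \<longrightarrow> 0 < Dj xs J S j) \<and> (Suc (Suc j) \<le> n \<longrightarrow> 0 < Dj xs J S (Suc j))"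
      if "1 \<le> j" "Suc j \<le> n" "xs j < \<sigma>" "\<sigma> < xs (Suc j)" "0 < J \<sigma>" for j \<sigma>
      using S2[OF incr pos lt1 o that] .
    define Di where "Di = Dj xs J S i"
    define Di1 where "Di1 = Dj xs J S (Suc i)"
    have DN: "Dj xs (\<lambda>\<sigma>. - J \<sigma>) S j = - Dj xs J S j" for j using Dj_neg .
    have region: "P \<sigma>" if s: "l < \<sigma>" "\<sigma> < r"
      and h1: "l < \<sigma> \<Longrightarrow> \<sigma> < p \<Longrightarrow> P \<sigma>" and h2: "\<sigma> = p \<Longrightarrow> P \<sigma>" and h3: "p < \<sigma> \<Longrightarrow> \<sigma> < q \<Longrightarrow> P \<sigma>"
      and h4: "\<sigma> = q \<Longrightarrow> P \<sigma>" and h5: "q < \<sigma> \<Longrightarrow> \<sigma> < r \<Longrightarrow> P \<sigma>" for P \<sigma>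
      using s h1 h2 h3 h4 h5 by (cases "\<sigma> < p"; cases "\<sigma> = p"; cases "\<sigma> < q"; cases "\<sigma> = q") auto
    have convex_nn: "0 \<le> J \<sigma>" if D: "0 < Di" "0 < Di1" and s: "l < \<sigma>" "\<sigma> < r" for \<sigma>
    proof (rule ccontr)
      assume "\<not> 0 \<le> J \<sigma>"
      hence neg: "J \<sigma> < 0" by simp
      show False
      proof (rule region[OF s, of "\<lambda>_. False"])
        assume "l < \<sigma>" "\<sigma> < p"
        thus False using S2n[of "i - 1" \<sigma>] neg i1 i2 in2 si D DN unfolding l_def p_def Di_def by auto
      next
        assume "\<sigma> = p" thus False using S1n[of i] neg i2 in2 D DN unfolding p_def Di_def by auto
      next
        assume "p < \<sigma>" "\<sigma> < q" thus False using S2n[of i \<sigma>] neg i2 in2 D DN unfolding p_def q_def Di_def by auto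
      next
        assume "\<sigma> = q" thus False using S1n[of "Suc i"] neg i2 in2 D DN unfolding q_def Di1_def by auto
      next
        assume "q < \<sigma>" "\<sigma> < r" thus False using S2n[of "Suc i" \<sigma>] neg i2 in2 D DN unfolding q_def r_def Di1_def by auto
      qed
    qed
    have concave_np: "J \<sigma> \<le> 0" if D: "Di < 0" "Di1 < 0" and s: "l < \<sigma>" "\<sigma> < r" for \<sigma>
    proof (rule ccontr)
      assume "\<not> J \<sigma> \<le> 0"
      hence ps: "0 < J \<sigma>" by simp
      show False
      proof (rule region[OF s, of "\<lambda>_. False"])
        assume "l < \<sigma>" "\<sigma> < p"
        thus False using S2p[of "i - 1" \<sigma>] ps i1 i2 in2 si D unfolding l_def p_def Di_def by auto
      next
        assume "\<sigma> = p" thus False using S1p[of i] ps i2 in2 D unfolding p_def Di_def by auto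
      next
        assume "p < \<sigma>" "\<sigma> < q" thus False using S2p[of i \<sigma>] ps i2 in2 D unfolding p_def q_def Di_def by auto
      next
        assume "\<sigma> = q" thus False using S1p[of "Suc i"] ps i2 in2 D unfolding q_def Di1_def by auto
      next
        assume "q < \<sigma>" "\<sigma> < r" thus False using S2p[of "Suc i" \<sigma>] ps i2 in2 D unfolding q_def r_def Di1_def by auto
      qed
    qed
    show ?thesis
    proof (cases "0 < Di \<and> 0 < Di1")
      case True
      have nn: "\<And>\<sigma>. l < \<sigma> \<Longrightarrow> \<sigma> < r \<Longrightarrow> 0 \<le> J \<sigma>" using convex_nn True by blast
      have "F - A \<le> 0" unfolding F_def A_def FA
      proof (intro sum_nonpos)
        fix \<sigma> show "J \<sigma> * E p q t \<sigma> \<le> 0"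
        proof (cases "p < \<sigma> \<and> \<sigma> < q")
          case True thus ?thesis using nn[of \<sigma>] E_chord(1)[OF pq tp, of \<sigma>] tq lp qr
            by (simp add: mult_nonneg_nonpos)
        next
          case False thus ?thesis using E_chord(2)[OF pq tp, of \<sigma>] tq by auto
        qed
      qed
      moreover have "0 \<le> F - B" unfolding F_def B_def FB
      proof (intro sum_nonneg)
        fix \<sigma> show "0 \<le> J \<sigma> * E q r t \<sigma>"
        proof (cases "t < \<sigma> \<and> \<sigma> < r")
          case True thus ?thesis using nn[of \<sigma>] E_left(1)[OF qr, of t \<sigma>] tq tp lp by simp
        next
          case False thus ?thesis using E_left(2)[OF qr, of t \<sigma>] tq by auto
        qed
      qed
      moreover have "0 \<le> F - C" unfolding F_def C_def FC
      proof (intro sum_nonneg)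
        fix \<sigma> show "0 \<le> J \<sigma> * E l p t \<sigma>"
        proof (cases "l < \<sigma> \<and> \<sigma> < t")
          case True thus ?thesis using nn[of \<sigma>] E_right(1)[OF lp tp, of \<sigma>] tq qr by simp
        next
          case False thus ?thesis using E_right(2)[OF lp tp, of \<sigma>] by auto
        qed
      qed
      ultimately show ?thesis using fin1[of B F A C "fstar t"] unfolding F_def A_def B_def C_def by simp
    next
      case notconv: False
      show ?thesis
      proof (cases "Di < 0 \<and> Di1 < 0")
        case True
        have np: "\<And>\<sigma>. l < \<sigma> \<Longrightarrow> \<sigma> < r \<Longrightarrow> J \<sigma> \<le> 0" using concave_np True by blast
        have "0 \<le> F - A" unfolding F_def A_def FA
        proof (intro sum_nonneg)
          fix \<sigma> show "0 \<le> J \<sigma> * E p q t \<sigma>"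
          proof (cases "p < \<sigma> \<and> \<sigma> < q")
            case True thus ?thesis using np[of \<sigma>] E_chord(1)[OF pq tp, of \<sigma>] tq lp qr
              by (simp add: mult_nonpos_nonpos)
          next
            case False thus ?thesis using E_chord(2)[OF pq tp, of \<sigma>] tq by auto
          qed
        qed
        moreover have "F - B \<le> 0" unfolding F_def B_def FB
        proof (intro sum_nonpos)
          fix \<sigma> show "J \<sigma> * E q r t \<sigma> \<le> 0"
          proof (cases "t < \<sigma> \<and> \<sigma> < r")
            case True thus ?thesis using np[of \<sigma>] E_left(1)[OF qr, of t \<sigma>] tq tp lp
              by (simp add: mult_nonpos_nonneg)
          next
            case False thus ?thesis using E_left(2)[OF qr, of t \<sigma>] tq by auto
          qed
        qed
        moreover have "F - C \<le> 0" unfolding F_def C_def FC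
        proof (intro sum_nonpos)
          fix \<sigma> show "J \<sigma> * E l p t \<sigma> \<le> 0"
          proof (cases "l < \<sigma> \<and> \<sigma> < t")
            case True thus ?thesis using np[of \<sigma>] E_right(1)[OF lp tp, of \<sigma>] tq qr
              by (simp add: mult_nonpos_nonneg)
          next
            case False thus ?thesis using E_right(2)[OF lp tp, of \<sigma>] by auto
          qed
        qed
        ultimately show ?thesis using fin2[of A F B C "fstar t"] unfolding F_def A_def B_def C_def by simp
      next
        case notconc: False
        have zz: "J \<sigma> = 0" if s: "p < \<sigma>" "\<sigma> < q" for \<sigma>
        proof (rule ccontr)
          assume nz: "J \<sigma> \<noteq> 0"
          show False
          proof (cases "0 < J \<sigma>")
            case True
            thus False using S2p[of i \<sigma>] i2 in2 s notconv unfolding p_def q_def Di_def Di1_def by auto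
          next
            case False
            hence "J \<sigma> < 0" using nz by simp
            thus False using S2n[of i \<sigma>] i2 in2 s notconc DN unfolding p_def q_def Di_def Di1_def by auto
          qed
        qed
        have "F - A = 0" unfolding F_def A_def FA
        proof (intro sum.neutral ballI)
          fix \<sigma> assume "\<sigma> \<in> S"
          show "J \<sigma> * E p q t \<sigma> = 0"
          proof (cases "p < \<sigma> \<and> \<sigma> < q")
            case True thus ?thesis using zz by simp
          next
            case False thus ?thesis using E_chord(2)[OF pq tp, of \<sigma>] tq by auto
          qed
        qed
        hence "F = A" by simp
        thus ?thesis unfolding F_def A_def by simp
      qed
    qed
  qed
  show ?thesis using part1 part2 part3 by blast
qed

end
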